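(* Let $g\in A[z;\sigma]$ be delay-free and semi-reduced, and let $\langle g\rangle:=\{fg\mid f\in A[z;\sigma]\}$ be the left ideal generated by $g$. Then the following are equivalent: (i) $\langle g\rangle$ is a direct summand of the left $\mathbb{F}[z]$-module $A[z;\sigma]$ (i.e. $\mathfrak{p}^{-1}(\langle g\rangle)$ is a $\sigma$-cyclic convolutional code); (ii) $\langle g\rangle$ is a direct summand of the ring $A[z;\sigma]$, i.e. there is a left ideal $J$ with $A[z;\sigma]=\langle g\rangle\oplus J$; (iii) $\xi(g)\in\mathcal{M}_{\mathrm{basic}}$.
   Context: Let $\mathbb{F}$ be a finite field with $q$ elements and $n\ge2$ a divisor of $q-1$. Let $A=\mathbb{F}\times\cdots\times\mathbb{F}$ ($n$ copies), elements written $[a_1,\dots,a_n]$, with $\mathbb{F}$ embedded diagonally; $e_i$ is the element with $1$ in position $i$ and $0$ elsewhere. Let $\sigma([a_1,\dots,a_n])=[a_n,a_1,\dots,a_{n-1}]$. $A[z;\sigma]$ is the skew polynomial ring of polynomials $\sum_\nu z^\nu a_\nu$ ($a_\nu\in A$, right coefficients) with multiplication determined by $az=z\sigma(a)$; it contains $\mathbb{F}[z]$ as a subring (since $\sigma$ fixes $\mathbb{F}$) and is a left $\mathbb{F}[z]$-module by left multiplication. Degree of $\sum z^\nu a_\nu$: largest $\nu$ with $a_\nu\ne0$. For $g\in A[z;\sigma]$: the components are $g^{(a)}=e_ag$, the support is $T_g=\{a\mid g^{(a)}\ne0\}$; $g$ is delay-free if $T_g=T_{g_0}$ where $g_0\in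 A$ is the constant term of $g$; each component has the form $\sum_j z^jc_{a,j}e_{(a+j-1\bmod n)+1}$ with $c_{a,j}\in\mathbb{F}$, and $g$ is semi-reduced if the leading coefficients of the components $g^{(a)}$, $a\in T_g$, lie in pairwise different ideals $\langle e_i\rangle$. Fix an $\mathbb{F}$-algebra isomorphism $\phi:\mathbb{F}[x]/\langle x^n-1\rangle\to A$ (it exists by the Chinese Remainder Theorem). Define $\mathfrak{p}:\mathbb{F}[z]^n\to A[z;\sigma]$ by $\sum_\nu z^\nu v_\nu\mapsto\sum_\nu z^\nu\phi(\sum_{i=0}^{n-1}v_{\nu,i}x^i)$ for $v_\nu=(v_{\nu,0},\dots,v_{\nu,n-1})\in\mathbb{F}^n$; it is an isomorphism of left $\mathbb{F}[z]$-modules. A $\sigma$-cyclic convolutional code is a submodule $\mathcal{C}\subseteq\mathbb{F}[z]^n$ that is a direct summand of $\mathbb{F}[z]^n$ and such that $\mathfrak{p}(\mathcal{C})$ is a left ideal of $A[z;\sigma]$. Let $\mathcal{M}=\{(m_{ab})\in\mathbb{F}[t]^{n\times n}\mid m_{ab}(0)=0\text{ for }1\le b<a\le n\}$. Writing $g=\sum_{l=0}^Nz^{nl}\sum_{i=0}^{n-1}z^i[c^l_{i1},\dots,c^l_{in}]$ uniquely, $\xi(g)$ is the matrix $(m_{ab})$ with $m_{ab}=\sum_lt^lc^l_{b-a,b}$ if $b\ge a$ and $m_{ab}=\sum_lt^{l+1}c^l_{n+b-a,b}$ if $b<a$; $\xi:A[z;\sigma]\to\mathcal{M}$ is a ring isomorphism.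 For $M\in\mathcal{M}$: $M$ is delay-free if $m_{aa}(0)\ne0$ for every index $a$ of a nonzero row of $M$. A matrix in $\mathbb{F}[t]^{k\times n}$ is basic if its $k\times k$ minors are coprime (equivalently it has rank $k$ at every point of an algebraic closure of $\mathbb{F}$). $\mathcal{M}_{\mathrm{basic}}$ is the set of $M\in\mathcal{M}$ that are delay-free and whose nonzero rows form a basic matrix. *)

theory Defs
  imports "HOL-Computational_Algebra.Polynomial" "Jordan_Normal_Form.Determinant"
          "Jordan_Normal_Form.DL_Submatrix"
begin

(* Elements of A[z;sigma] (A = F^n) are encoded by their n position-polynomials:
   g = sum_nu z^nu a_nu  is represented by  (\<lambda>i. sum_nu a_nu(i) z^nu),  i < n
   (0-indexed positions; positions i >= n carry 0). *)

definition skp :: "nat \<Rightarrow> (nat \<Rightarrow> 'a::field poly) set" where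
  "skp n = {g. \<forall>i\<ge>n. g i = 0}"

definition skzero :: "nat \<Rightarrow> 'a::field poly" where
  "skzero = (\<lambda>i. 0)"

definition skadd :: "(nat \<Rightarrow> 'a::field poly) \<Rightarrow> (nat \<Rightarrow> 'a poly) \<Rightarrow> nat \<Rightarrow> 'a poly" where
  "skadd f g = (\<lambda>i. f i + g i)"

(* sigma^lambda shifts positions: sigma^lambda(a)_i = a_{(i - lambda) mod n} *)
definition shiftpos :: "nat \<Rightarrow> nat \<Rightarrow> nat \<Rightarrow> nat" where
  "shiftpos n l i = (i + (n - l mod n)) mod n"

(* skew multiplication: (sum z^mu a_mu)(sum z^l b_l) = sum z^(mu+l) sigma^l(a_mu) b_l *)
definition skmult :: "nat \<Rightarrow> (nat \<Rightarrow> 'a::field poly) \<Rightarrow> (nat \<Rightarrow> 'a poly) \<Rightarrow> nat \<Rightarrow> 'a poly" where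
  "skmult n f g = (\<lambda>i. if i < n then
      (\<Sum>l\<le>degree (g i). monom (coeff (g i) l) l * f (shiftpos n l i)) else 0)"

(* left multiplication by p \<in> F[z] (F[z] embedded diagonally) *)
definition sksmult :: "'a::field poly \<Rightarrow> (nat \<Rightarrow> 'a poly) \<Rightarrow> nat \<Rightarrow> 'a poly" where
  "sksmult p g = (\<lambda>i. p * g i)"

definition left_ideal_gen :: "nat \<Rightarrow> (nat \<Rightarrow> 'a::field poly) \<Rightarrow> (nat \<Rightarrow> 'a poly) set" where
  "left_ideal_gen n g = {skmult n f g | f. f \<in> skp n}"

definition is_left_ideal :: "nat \<Rightarrow> (nat \<Rightarrow> 'a::field poly) set \<Rightarrow> bool" where
  "is_left_ideal n J \<longleftrightarrow> J \<subseteq> skp n \<and> skzero \<in> J \<and>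
     (\<forall>x\<in>J. \<forall>y\<in>J. skadd x y \<in> J) \<and> (\<forall>f\<in>skp n. \<forall>x\<in>J. skmult n f x \<in> J)"

definition is_Fz_submodule :: "nat \<Rightarrow> (nat \<Rightarrow> 'a::field poly) set \<Rightarrow> bool" where
  "is_Fz_submodule n N \<longleftrightarrow> N \<subseteq> skp n \<and> skzero \<in> N \<and>
     (\<forall>x\<in>N. \<forall>y\<in>N. skadd x y \<in> N) \<and> (\<forall>p. \<forall>x\<in>N. sksmult p x \<in> N)"

definition internal_direct_sum :: "nat \<Rightarrow> (nat \<Rightarrow> 'a::field poly) set \<Rightarrow> (nat \<Rightarrow> 'a poly) set \<Rightarrow> bool" where
  "internal_direct_sum n I J \<longleftrightarrow> I \<inter> J = {skzero} \<and> {skadd x y | x y. x \<in> I \<and> y \<in> J} = skp n"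

definition direct_summand_Fz :: "nat \<Rightarrow> (nat \<Rightarrow> 'a::field poly) set \<Rightarrow> bool" where
  "direct_summand_Fz n I \<longleftrightarrow> (\<exists>N. is_Fz_submodule n N \<and> internal_direct_sum n I N)"

definition direct_summand_ring :: "nat \<Rightarrow> (nat \<Rightarrow> 'a::field poly) set \<Rightarrow> bool" where
  "direct_summand_ring n I \<longleftrightarrow> (\<exists>J. is_left_ideal n J \<and> internal_direct_sum n I J)"

definition unit_e :: "nat \<Rightarrow> nat \<Rightarrow> 'a::field poly" where
  "unit_e a = (\<lambda>i. if i = a then 1 else 0)"

definition comp :: "nat \<Rightarrow> (nat \<Rightarrow> 'a::field poly) \<Rightarrow> nat \<Rightarrow> nat \<Rightarrow> 'a poly" where
  "comp n g a = skmult n (unit_e a) g"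

definition supp :: "nat \<Rightarrow> (nat \<Rightarrow> 'a::field poly) \<Rightarrow> nat set" where
  "supp n g = {a. a < n \<and> comp n g a \<noteq> skzero}"

definition const_term :: "nat \<Rightarrow> (nat \<Rightarrow> 'a::field poly) \<Rightarrow> nat \<Rightarrow> 'a poly" where
  "const_term n g = (\<lambda>i. if i < n then [:coeff (g i) 0:] else 0)"

definition delay_free :: "nat \<Rightarrow> (nat \<Rightarrow> 'a::field poly) \<Rightarrow> bool" where
  "delay_free n g \<longleftrightarrow> supp n g = supp n (const_term n g)"

definition skdeg :: "nat \<Rightarrow> (nat \<Rightarrow> 'a::field poly) \<Rightarrow> nat" where
  "skdeg n g = Max (insert 0 (degree ` g ` {..<n}))"

definition sklc :: "nat \<Rightarrow> (nat \<Rightarrow> 'a::field poly) \<Rightarrow> nat \<Rightarrow> 'a" where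
  "sklc n g = (\<lambda>i. if i < n then coeff (g i) (skdeg n g) else 0)"

definition in_ideal_e :: "nat \<Rightarrow> (nat \<Rightarrow> 'a::field) \<Rightarrow> nat \<Rightarrow> bool" where
  "in_ideal_e n v i \<longleftrightarrow> (\<forall>j<n. j \<noteq> i \<longrightarrow> v j = 0)"

definition semi_reduced :: "nat \<Rightarrow> (nat \<Rightarrow> 'a::field poly) \<Rightarrow> bool" where
  "semi_reduced n g \<longleftrightarrow> (\<forall>a\<in>supp n g. \<forall>b\<in>supp n g. a \<noteq> b \<longrightarrow>
     \<not> (\<exists>i<n. in_ideal_e n (sklc n (comp n g a)) i \<and> in_ideal_e n (sklc n (comp n g b)) i))"

(* xi(g), 0-indexed: coefficient of z^(n l + i) at position b is c^l_{i,b} *)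
definition xi_entry :: "nat \<Rightarrow> (nat \<Rightarrow> 'a::field poly) \<Rightarrow> nat \<Rightarrow> nat \<Rightarrow> 'a poly" where
  "xi_entry n g a b = (if b \<ge> a
     then (\<Sum>l\<le>degree (g b). monom (coeff (g b) (n*l + (b - a))) l)
     else (\<Sum>l\<le>degree (g b). monom (coeff (g b) (n*l + (n + b - a))) (l+1)))"

definition xi :: "nat \<Rightarrow> (nat \<Rightarrow> 'a::field poly) \<Rightarrow> 'a poly mat" where
  "xi n g = mat n n (\<lambda>(a,b). xi_entry n g a b)"

definition in_M :: "nat \<Rightarrow> 'a::field poly mat \<Rightarrow> bool" where
  "in_M n M \<longleftrightarrow> M \<in> carrier_mat n n \<and>
     (\<forall>a<n. \<forall>b<n. b < a \<longrightarrow> poly (M $$ (a,b)) 0 = 0)"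

definition nonzero_rows :: "'a::field poly mat \<Rightarrow> nat set" where
  "nonzero_rows M = {a. a < dim_row M \<and> (\<exists>b<dim_col M. M $$ (a,b) \<noteq> 0)}"

definition delay_free_mat :: "'a::field poly mat \<Rightarrow> bool" where
  "delay_free_mat M \<longleftrightarrow> (\<forall>a\<in>nonzero_rows M. poly (M $$ (a,a)) 0 \<noteq> 0)"

definition basic :: "'a::field poly mat \<Rightarrow> bool" where
  "basic B \<longleftrightarrow> (\<forall>d. (\<forall>J. J \<subseteq> {..<dim_col B} \<and> card J = dim_row B \<longrightarrow>
                        d dvd det (submatrix B UNIV J)) \<longrightarrow> is_unit d)"

definition M_basic :: "nat \<Rightarrow> 'a::field poly mat \<Rightarrow> bool" where
  "M_basic n M \<longleftrightarrow> in_M n M \<and> delay_free_mat M \<and> basic (submatrix M (nonzero_rows M) UNIV)"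

end

theory Submission
  imports Defs
begin


lemma shiftpos_int:
  assumes "n > 0"
  shows "int (shiftpos n l i) = (int i - int l) mod int n"
proof -
  have "l mod n \<le> n" using assms by simp
  then have h: "int (n - l mod n) = int n - int l mod int n"
    by (simp add: of_nat_diff zmod_int)
  have "int (shiftpos n l i) = (int i + (int n - int l mod int n)) mod int n"
    unfolding shiftpos_def by (simp add: zmod_int h)
  also have "\<dots> = (int i - int l) mod int n"
  proof -
    have "int i + (int n - int l mod int n) = (int i - int l mod int n) + int n" by simp
    then have "(int i + (int n - int l mod int n)) mod int n = (int i - int l mod int n) mod int n"
      by (simp only: mod_add_self2)
    also have "\<dots> = (int i - int l) mod int n" by (rule mod_diff_right_eq)
    finally show ?thesis .
  qed
  finally show ?thesis .
qed

lemma shiftpos_lt: "n > 0 \<Longrightarrow> shiftpos n l i < n"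
  unfolding shiftpos_def by simp

lemma coeff_comp:
  "coeff (comp n g a j) l = (if j < n \<and> shiftpos n l j = a then coeff (g j) l else 0)"
proof -
  have "coeff (comp n g a j) l = (if j < n then (\<Sum>m\<le>degree (g j). coeff (monom (coeff (g j) m) m * unit_e a (shiftpos n m j)) l) else 0)"
    unfolding comp_def skmult_def by (simp add: coeff_sum)
  also have "\<dots> = (if j < n \<and> shiftpos n l j = a then coeff (g j) l else 0)"
  proof (cases "j < n")
    case True
    have "(\<Sum>m\<le>degree (g j). coeff (monom (coeff (g j) m) m * unit_e a (shiftpos n m j)) l)
       = (\<Sum>m\<le>degree (g j). if m = l then (if shiftpos n l j = a then coeff (g j) l else 0) else 0)"
      by (rule sum.cong) (auto simp: unit_e_def coeff_monom)
    also have "\<dots> = (if shiftpos n l j = a then coeff (g j) l else 0)"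
      by (cases "l \<le> degree (g j)") (auto simp: coeff_eq_0)
    finally show ?thesis using True by simp
  qed simp
  finally show ?thesis .
qed

lemma skmult_comp:
  assumes "n > 0"
  shows "skmult n f x j = (\<Sum>i<n. f i * comp n x i j)"
proof (cases "j < n")
  case True
  have "(\<Sum>i<n. f i * comp n x i j)
     = (\<Sum>i<n. \<Sum>m\<le>degree (x j). monom (coeff (x j) m) m * (f i * unit_e i (shiftpos n m j)))"
    unfolding comp_def skmult_def using True by (simp add: sum_distrib_left algebra_simps)
  also have "\<dots> = (\<Sum>m\<le>degree (x j). monom (coeff (x j) m) m * (\<Sum>i<n. f i * unit_e i (shiftpos n m j)))"
    by (subst sum.swap) (simp add: sum_distrib_left)
  also have "\<dots> = (\<Sum>m\<le>degree (x j). monom (coeff (x j) m) m * f (shiftpos n m j))"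
  proof (rule sum.cong)
    fix m
    have "(\<Sum>i<n. f i * unit_e i (shiftpos n m j)) = (\<Sum>i<n. if i = shiftpos n m j then f i else 0)"
      by (rule sum.cong) (auto simp: unit_e_def)
    also have "\<dots> = f (shiftpos n m j)" using shiftpos_lt[OF assms] by simp
    finally show "monom (coeff (x j) m) m * (\<Sum>i<n. f i * unit_e i (shiftpos n m j)) =
         monom (coeff (x j) m) m * f (shiftpos n m j)" by simp
  qed simp
  finally show ?thesis unfolding skmult_def using True by simp
next
  case False
  then show ?thesis unfolding skmult_def comp_def by simp
qed

lemma skmult_comp_fun:
  assumes "n > 0"
  shows "skmult n f x = (\<lambda>j. \<Sum>i<n. f i * comp n x i j)"
  using skmult_comp[OF assms] by blast

lemma comp_skp: "comp n x a \<in> skp n"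
  unfolding skp_def by (auto intro!: poly_eqI simp: coeff_comp)

lemma comp_ge: "j \<ge> n \<Longrightarrow> comp n x a j = 0"
  by (auto intro!: poly_eqI simp: coeff_comp)

lemma comp_comp:
  "comp n (comp n x a) b j = (if a = b then comp n x a j else 0)"
  by (rule poly_eqI) (auto simp: coeff_comp)

lemma comp_sum:
  assumes "n > 0" "x \<in> skp n"
  shows "(\<Sum>a<n. comp n x a j) = x j"
proof (cases "j < n")
  case True
  show ?thesis
  proof (rule poly_eqI)
    fix l
    have "coeff (\<Sum>a<n. comp n x a j) l = (\<Sum>a<n. if a = shiftpos n l j then coeff (x j) l else 0)"
      unfolding coeff_sum by (rule sum.cong) (auto simp: coeff_comp True)
    also have "\<dots> = coeff (x j) l" using shiftpos_lt[OF assms(1)] by simp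
    finally show "coeff (\<Sum>a<n. comp n x a j) l = coeff (x j) l" .
  qed
next
  case False
  then show ?thesis using assms(2) by (simp add: comp_ge skp_def)
qed

lemma comp_add: "comp n (\<lambda>j. x j + y j) a j = comp n x a j + comp n y a j"
  by (rule poly_eqI) (auto simp: coeff_comp)

lemma comp_diff: "comp n (\<lambda>j. x j - y j) a j = comp n x a j - comp n y a j"
  by (rule poly_eqI) (auto simp: coeff_comp)

lemma comp_const: "comp n (\<lambda>j. smult c (x j)) a j = smult c (comp n x a j)"
  by (rule poly_eqI) (auto simp: coeff_comp)

lemma comp_sumf: "comp n (\<lambda>j. \<Sum>k\<in>K. x k j) a j = (\<Sum>k\<in>K. comp n (x k) a j)"
  by (rule poly_eqI) (auto simp: coeff_comp coeff_sum)

lemma comp_zero: "comp n (\<lambda>j. 0) a j = 0"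
  by (rule poly_eqI) (auto simp: coeff_comp)

lemma shiftpos_Suc:
  assumes "n > 0" "a < n"
  shows "shiftpos n (Suc m) j = a \<longleftrightarrow> shiftpos n m j = (Suc a) mod n"
proof -
  have "shiftpos n (Suc m) j = a \<longleftrightarrow> int (shiftpos n (Suc m) j) = int a" by simp
  also have "\<dots> \<longleftrightarrow> (int j - int m - 1) mod int n = int a"
    by (simp add: shiftpos_int[OF assms(1)] algebra_simps)
  also have "\<dots> \<longleftrightarrow> (int j - int m) mod int n = (int a + 1) mod int n"
  proof
    assume h: "(int j - int m - 1) mod int n = int a"
    have "(int j - int m) mod int n = ((int j - int m - 1) mod int n + 1) mod int n"
      by (simp add: mod_add_left_eq)
    then show "(int j - int m) mod int n = (int a + 1) mod int n" using h by simp
  next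
    assume h: "(int j - int m) mod int n = (int a + 1) mod int n"
    have "(int j - int m - 1) mod int n = ((int j - int m) mod int n - 1) mod int n"
      by (simp add: mod_diff_left_eq)
    also have "\<dots> = ((int a + 1) mod int n - 1) mod int n" using h by simp
    also have "\<dots> = int a" using assms by (simp add: mod_diff_left_eq)
    finally show "(int j - int m - 1) mod int n = int a" .
  qed
  also have "\<dots> \<longleftrightarrow> int (shiftpos n m j) = int (Suc a mod n)"
    by (simp add: shiftpos_int[OF assms(1)] zmod_int add.commute)
  finally show ?thesis by simp
qed

lemma comp_z:
  assumes "n > 0" "a < n"
  shows "comp n (\<lambda>j. [:0,1:] * x j) a j = [:0,1:] * comp n x (Suc a mod n) j"
proof (rule poly_eqI)
  fix l
  show "coeff (comp n (\<lambda>j. [:0, 1:] * x j) a j) l = coeff ([:0, 1:] * comp n x (Suc a mod n) j) l"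
  proof (cases l)
    case 0
    then show ?thesis by (simp add: coeff_comp)
  next
    case (Suc m)
    then show ?thesis using shiftpos_Suc[OF assms, of m j] by (simp add: coeff_comp)
  qed
qed

lemma comp_pCons0:
  assumes "n > 0" "a < n"
  shows "comp n (\<lambda>j. pCons 0 (x j)) a j = pCons 0 (comp n x (Suc a mod n) j)"
proof (rule poly_eqI)
  fix l
  show "coeff (comp n (\<lambda>j. pCons 0 (x j)) a j) l = coeff (pCons 0 (comp n x (Suc a mod n) j)) l"
  proof (cases l)
    case 0
    then show ?thesis by (simp add: coeff_comp)
  next
    case (Suc m)
    then show ?thesis using shiftpos_Suc[OF assms, of m j] by (simp add: coeff_comp)
  qed
qed

lemma comp_zero_fun: "comp n (\<lambda>j. 0) a = (\<lambda>j. 0)"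
  by (rule ext, rule comp_zero)

lemma comp_comp_fun:
  "comp n (comp n x a) b = (if a = b then comp n x a else (\<lambda>j. 0))"
  by (rule ext) (simp add: comp_comp)

lemma sum_rot:
  assumes "n > 0"
  shows "(\<Sum>c<n. F (Suc c mod n)) = (\<Sum>c<n. F c)"
proof -
  have inj: "inj_on (\<lambda>c. Suc c mod n) {..<n}"
  proof (rule inj_onI)
    fix x y assume "x \<in> {..<n}" "y \<in> {..<n}" "Suc x mod n = Suc y mod n"
    then show "x = y" by (auto) (metis mod_Suc mod_if nat.distinct(1) nat.inject)
  qed
  have "(\<lambda>c. Suc c mod n) ` {..<n} = {..<n}"
    by (rule endo_inj_surj) (use inj assms in auto)
  then have "bij_betw (\<lambda>c. Suc c mod n) {..<n} {..<n}" using inj by (simp add: bij_betw_def)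
  then show ?thesis by (rule sum.reindex_bij_betw)
qed




definition lcomb :: "nat \<Rightarrow> (nat \<Rightarrow> nat \<Rightarrow> 'a::field poly) \<Rightarrow> (nat \<Rightarrow> 'a poly) \<Rightarrow> nat \<Rightarrow> 'a poly" where
  "lcomb n q f = (\<lambda>j. \<Sum>a<n. f a * q a j)"

lemma left_ideal_gen_eq:
  assumes "n > 0"
  shows "left_ideal_gen n g = range (lcomb n (comp n g))"
proof
  show "left_ideal_gen n g \<subseteq> range (lcomb n (comp n g))"
    unfolding left_ideal_gen_def lcomb_def using skmult_comp_fun[OF assms] by auto
  show "range (lcomb n (comp n g)) \<subseteq> left_ideal_gen n g"
  proof
    fix x assume "x \<in> range (lcomb n (comp n g))"
    then obtain f where x: "x = lcomb n (comp n g) f" by auto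
    let ?f = "\<lambda>i. if i < n then f i else 0"
    have "?f \<in> skp n" unfolding skp_def by auto
    moreover have "skmult n ?f g = x" unfolding x skmult_comp_fun[OF assms] lcomb_def
      by (rule ext) (rule sum.cong, auto)
    ultimately show "x \<in> left_ideal_gen n g" unfolding left_ideal_gen_def by blast
  qed
qed

lemma ring_imp_Fz:
  fixes I :: "(nat \<Rightarrow> 'a::field poly) set"
  assumes "n > 0" "direct_summand_ring n I"
  shows "direct_summand_Fz n I"
proof -
  obtain J where J: "is_left_ideal n J" "internal_direct_sum n I J"
    using assms(2) unfolding direct_summand_ring_def by blast
  have "is_Fz_submodule n J"
    unfolding is_Fz_submodule_def
  proof (intro conjI allI ballI)
    show "J \<subseteq> skp n" "skzero \<in> J" using J(1) unfolding is_left_ideal_def by auto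
    show "skadd x y \<in> J" if "x \<in> J" "y \<in> J" for x y
      using J(1) that unfolding is_left_ideal_def by auto
    fix p :: "'a poly" and x assume x: "x \<in> J"
    let ?f = "\<lambda>i. if i < n then p else 0"
    have f: "?f \<in> skp n" unfolding skp_def by auto
    have xs: "x \<in> skp n" using x J(1) unfolding is_left_ideal_def by auto
    have "skmult n ?f x = sksmult p x"
    proof (rule ext)
      fix j
      have "skmult n ?f x j = (\<Sum>i<n. p * comp n x i j)"
        unfolding skmult_comp[OF assms(1)] by (rule sum.cong) auto
      also have "\<dots> = p * x j" by (simp add: sum_distrib_left[symmetric] comp_sum[OF assms(1) xs])
      finally show "skmult n ?f x j = sksmult p x j" unfolding sksmult_def .
    qed
    then show "sksmult p x \<in> J" using J(1) f x unfolding is_left_ideal_def by metis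
  qed
  then show ?thesis using J(2) unfolding direct_summand_Fz_def by blast
qed

lemma smult_sum_right: "smult e (\<Sum>k\<in>K. f k) = (\<Sum>k\<in>K. smult e (f k))"
  by (induction K rule: infinite_finite_induct) (auto simp: smult_add_right)

lemma pCons0_sum:
  fixes f :: "'b \<Rightarrow> 'a::comm_ring_1 poly"
  shows "pCons 0 (\<Sum>k\<in>K. f k) = (\<Sum>k\<in>K. pCons 0 (f k))"
proof -
  have e: "\<And>r::'a::comm_ring_1 poly. pCons 0 r = monom 1 1 * r" by (simp add: monom_Suc)
  show ?thesis unfolding e by (simp add: sum_distrib_left)
qed

locale sk =
  fixes n :: nat and g :: "nat \<Rightarrow> 'a::field poly"
  assumes npos: "n > 0" and gskp: "g \<in> skp n"
begin

abbreviation "q \<equiv> comp n g"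
abbreviation "S \<equiv> supp n g"
abbreviation "I \<equiv> range (lcomb n q)"

lemma S_sub: "S \<subseteq> {..<n}" unfolding supp_def by auto
lemma S_fin: "finite S" using S_sub finite_subset by blast

lemma comp_big: "c \<ge> n \<Longrightarrow> comp n x c = (\<lambda>j. 0)"
proof -
  assume c: "c \<ge> n"
  have "\<And>l j. shiftpos n l j \<noteq> c" using shiftpos_lt[OF npos] c by (metis leD)
  then show ?thesis by (intro ext poly_eqI) (simp add: coeff_comp)
qed

lemma q_big: "a \<ge> n \<Longrightarrow> q a = (\<lambda>j. 0)"
  by (rule comp_big)

lemma q_out: "a \<notin> S \<Longrightarrow> q a = (\<lambda>j. 0)"
  using q_big unfolding supp_def skzero_def by (cases "a < n") auto

lemma lcomb_S: "lcomb n q f j = (\<Sum>a\<in>S. f a * q a j)"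
  unfolding lcomb_def
  by (rule sum.mono_neutral_right) (use S_sub q_out in auto)

lemma q_in_I: "q a \<in> I"
proof (cases "a < n")
  case True
  have "lcomb n q (\<lambda>b. if b = a then 1 else 0) = q a"
  proof (rule ext)
    fix j
    have "(\<Sum>b<n. (if b = a then 1 else 0) * q b j) = (\<Sum>b<n. if b = a then q b j else 0)"
      by (rule sum.cong) auto
    then show "lcomb n q (\<lambda>b. if b = a then 1 else 0) j = q a j" unfolding lcomb_def using True by simp
  qed
  then show ?thesis by (metis rangeI)
next
  case False
  have "lcomb n q (\<lambda>b. 0) = q a" unfolding lcomb_def using False q_big by auto
  then show ?thesis by (metis rangeI)
qed

lemma I_zero: "(\<lambda>j. 0) \<in> I"
proof -
  have "lcomb n q (\<lambda>b. 0) = (\<lambda>j. 0)" unfolding lcomb_def by auto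
  then show ?thesis by (metis rangeI)
qed

lemma I_add: "x \<in> I \<Longrightarrow> y \<in> I \<Longrightarrow> (\<lambda>j. x j + y j) \<in> I"
proof -
  assume "x \<in> I" "y \<in> I"
  then obtain f f' where "x = lcomb n q f" "y = lcomb n q f'" by auto
  then have "(\<lambda>j. x j + y j) = lcomb n q (\<lambda>a. f a + f' a)"
    unfolding lcomb_def by (auto simp: sum.distrib algebra_simps)
  then show ?thesis by (metis rangeI)
qed

lemma I_mult: "x \<in> I \<Longrightarrow> (\<lambda>j. p * x j) \<in> I"
proof -
  assume "x \<in> I"
  then obtain f where "x = lcomb n q f" by auto
  then have "(\<lambda>j. p * x j) = lcomb n q (\<lambda>a. p * f a)"
    unfolding lcomb_def by (auto simp: sum_distrib_left algebra_simps)
  then show ?thesis by (metis rangeI)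
qed

lemma I_smult: "x \<in> I \<Longrightarrow> (\<lambda>j. smult c (x j)) \<in> I"
  using I_mult[of x "[:c:]"] by simp

lemma I_pCons0: "x \<in> I \<Longrightarrow> (\<lambda>j. pCons 0 (x j)) \<in> I"
proof -
  assume "x \<in> I"
  have e: "\<And>r::'a poly. pCons 0 r = monom 1 1 * r"
    by (simp add: monom_Suc)
  show ?thesis unfolding e by (rule I_mult) fact
qed

lemma I_diff: "x \<in> I \<Longrightarrow> y \<in> I \<Longrightarrow> (\<lambda>j. x j - y j) \<in> I"
  using I_add[of x "\<lambda>j. (-1) * y j"] I_mult[of y "-1"] by simp

lemma I_sum: "finite K \<Longrightarrow> (\<forall>k\<in>K. x k \<in> I) \<Longrightarrow> (\<lambda>j. \<Sum>k\<in>K. x k j) \<in> I"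
proof (induction K rule: finite_induct)
  case empty
  then show ?case using I_zero by simp
next
  case (insert k K)
  then show ?case using I_add[of "x k" "\<lambda>j. \<Sum>k\<in>K. x k j"] by simp
qed

lemma I_skp: "x \<in> I \<Longrightarrow> x \<in> skp n"
  unfolding lcomb_def skp_def by (auto simp: comp_ge)

lemma comp_qmult_I: "comp n (\<lambda>j. p * q a j) c \<in> I"
proof (induction p arbitrary: c)
  case 0
  have "comp n (\<lambda>j. 0 * q a j) c = (\<lambda>j. 0)" by (rule ext, simp add: comp_zero)
  then show ?case using I_zero by simp
next
  case (pCons e p)
  show ?case
  proof (cases "c < n")
    case True
    have "comp n (\<lambda>j. pCons e p * q a j) c
        = (\<lambda>j. smult e (comp n (q a) c j) + pCons 0 (comp n (\<lambda>j. p * q a j) (Suc c mod n) j))"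
    proof (rule ext)
      fix j
      have "comp n (\<lambda>j. pCons e p * q a j) c j = comp n (\<lambda>j. smult e (q a j) + pCons 0 (p * q a j)) c j"
        by simp
      also have "\<dots> = smult e (comp n (q a) c j) + pCons 0 (comp n (\<lambda>j. p * q a j) (Suc c mod n) j)"
        by (simp add: comp_add comp_const comp_pCons0[OF npos True])
      finally show "comp n (\<lambda>j. pCons e p * q a j) c j = smult e (comp n (q a) c j) + pCons 0 (comp n (\<lambda>j. p * q a j) (Suc c mod n) j)" .
    qed
    moreover have "comp n (q a) c \<in> I" using q_in_I I_zero by (simp add: comp_comp_fun)
    moreover have "(\<lambda>j. smult e (comp n (q a) c j)) \<in> I" by (rule I_smult) fact
    moreover have "(\<lambda>j. pCons 0 (comp n (\<lambda>j. p * q a j) (Suc c mod n) j)) \<in> I"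
      by (rule I_pCons0) (rule pCons.IH)
    ultimately show ?thesis using I_add by simp
  next
    case False
    have "comp n (\<lambda>j. pCons e p * q a j) c = (\<lambda>j. 0)" by (rule comp_big) (use False in simp)
    then show ?thesis using I_zero by simp
  qed
qed

lemma I_comp: "x \<in> I \<Longrightarrow> comp n x c \<in> I"
proof -
  assume "x \<in> I"
  then obtain f where x: "x = lcomb n q f" by auto
  have "comp n x c = (\<lambda>j. \<Sum>a<n. comp n (\<lambda>j. f a * q a j) c j)"
    unfolding x lcomb_def by (rule ext) (rule comp_sumf)
  also have "\<dots> \<in> I" by (rule I_sum) (auto intro: comp_qmult_I)
  finally show ?thesis .
qed


definition RI :: bool where
  "RI \<longleftrightarrow> (\<exists>\<beta>. \<forall>a\<in>S. \<forall>a'\<in>S. (\<Sum>i<n. q a i * \<beta> i a') = (if a = a' then 1 else 0))"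

definition indep :: bool where
  "indep \<longleftrightarrow> (\<forall>lam. (\<forall>j. (\<Sum>a\<in>S. lam a * q a j) = 0) \<longrightarrow> (\<forall>a\<in>S. lam a = 0))"

definition Pm :: "(nat \<Rightarrow> nat \<Rightarrow> 'a poly) \<Rightarrow> (nat \<Rightarrow> 'a poly) \<Rightarrow> nat \<Rightarrow> 'a poly" where
  "Pm \<beta> y = lcomb n q (\<lambda>a. if a \<in> S then (\<Sum>i<n. y i * \<beta> i a) else 0)"

definition Pp :: "(nat \<Rightarrow> nat \<Rightarrow> 'a poly) \<Rightarrow> (nat \<Rightarrow> 'a poly) \<Rightarrow> nat \<Rightarrow> 'a poly" where
  "Pp \<beta> y = (\<lambda>j. \<Sum>c<n. comp n (Pm \<beta> (comp n y c)) c j)"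

lemma Pm_I: "Pm \<beta> y \<in> I" unfolding Pm_def by simp

lemma Pm_add: "Pm \<beta> (\<lambda>j. x j + y j) = (\<lambda>j. Pm \<beta> x j + Pm \<beta> y j)"
proof (rule ext)
  fix j
  have "\<And>a. (if a \<in> S then (\<Sum>i<n. (x i + y i) * \<beta> i a) else 0)
     = (if a \<in> S then (\<Sum>i<n. x i * \<beta> i a) else 0) + (if a \<in> S then (\<Sum>i<n. y i * \<beta> i a) else 0)"
    by (simp add: sum.distrib distrib_right)
  then show "Pm \<beta> (\<lambda>j. x j + y j) j = Pm \<beta> x j + Pm \<beta> y j"
    unfolding Pm_def lcomb_def by (simp add: sum.distrib distrib_right)
qed

lemma Pm_mult: "Pm \<beta> (\<lambda>j. p * x j) = (\<lambda>j. p * Pm \<beta> x j)"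
proof (rule ext)
  fix j
  have "\<And>a. (if a \<in> S then (\<Sum>i<n. (p * x i) * \<beta> i a) else 0)
     = p * (if a \<in> S then (\<Sum>i<n. x i * \<beta> i a) else 0)"
    by (simp add: sum_distrib_left mult.assoc)
  then show "Pm \<beta> (\<lambda>j. p * x j) j = p * Pm \<beta> x j"
    unfolding Pm_def lcomb_def by (simp add: sum_distrib_left mult.assoc)
qed

lemma Pm_zero: "Pm \<beta> (\<lambda>j. 0::'a poly) = (\<lambda>j. 0)"
  using Pm_mult[of \<beta> 0 "\<lambda>j. 0"] by simp

lemma Pp_I: "Pp \<beta> y \<in> I"
  unfolding Pp_def by (rule I_sum) (auto intro: I_comp Pm_I)

lemma Pp_add: "Pp \<beta> (\<lambda>j. x j + y j) = (\<lambda>j. Pp \<beta> x j + Pp \<beta> y j)"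
proof (rule ext)
  fix j
  have "\<And>c. comp n (\<lambda>j. x j + y j) c = (\<lambda>j. comp n x c j + comp n y c j)"
    by (rule ext) (rule comp_add)
  then show "Pp \<beta> (\<lambda>j. x j + y j) j = Pp \<beta> x j + Pp \<beta> y j"
    unfolding Pp_def by (simp add: Pm_add comp_add sum.distrib)
qed

lemma Pp_zero: "Pp \<beta> (\<lambda>j. 0) = (\<lambda>j. 0)"
  unfolding Pp_def by (simp add: comp_zero_fun Pm_zero comp_zero)

lemma Pp_smult: "Pp \<beta> (\<lambda>j. smult e (x j)) = (\<lambda>j. smult e (Pp \<beta> x j))"
proof (rule ext)
  fix j
  have "\<And>c. comp n (\<lambda>j. smult e (x j)) c = (\<lambda>j. smult e (comp n x c j))"
    by (rule ext) (rule comp_const)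
  moreover have "\<And>y. Pm \<beta> (\<lambda>j. smult e (y j)) = (\<lambda>j. smult e (Pm \<beta> y j))"
    using Pm_mult[of \<beta> "[:e:]"] by simp
  ultimately show "Pp \<beta> (\<lambda>j. smult e (x j)) j = smult e (Pp \<beta> x j)"
    unfolding Pp_def by (simp add: comp_const smult_sum_right)
qed

lemma Pp_pCons0: "Pp \<beta> (\<lambda>j. pCons 0 (x j)) = (\<lambda>j. pCons 0 (Pp \<beta> x j))"
proof (rule ext)
  fix j
  have e: "\<And>r::'a poly. pCons 0 r = monom 1 1 * r" by (simp add: monom_Suc)
  have "Pp \<beta> (\<lambda>j. pCons 0 (x j)) j = (\<Sum>c<n. comp n (Pm \<beta> (\<lambda>j. pCons 0 (comp n x (Suc c mod n) j))) c j)"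
    unfolding Pp_def
  proof (rule sum.cong)
    fix c assume "c \<in> {..<n}"
    then have "comp n (\<lambda>j. pCons 0 (x j)) c = (\<lambda>j. pCons 0 (comp n x (Suc c mod n) j))"
      by (intro ext comp_pCons0[OF npos]) auto
    then show "comp n (Pm \<beta> (comp n (\<lambda>j. pCons 0 (x j)) c)) c j =
         comp n (Pm \<beta> (\<lambda>j. pCons 0 (comp n x (Suc c mod n) j))) c j" by simp
  qed simp
  also have "\<dots> = (\<Sum>c<n. pCons 0 (comp n (Pm \<beta> (comp n x (Suc c mod n))) (Suc c mod n) j))"
  proof (rule sum.cong)
    fix c assume c: "c \<in> {..<n}"
    have "Pm \<beta> (\<lambda>j. pCons 0 (comp n x (Suc c mod n) j)) = (\<lambda>j. pCons 0 (Pm \<beta> (comp n x (Suc c mod n)) j))"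
      unfolding e by (rule Pm_mult)
    then show "comp n (Pm \<beta> (\<lambda>j. pCons 0 (comp n x (Suc c mod n) j))) c j =
      pCons 0 (comp n (Pm \<beta> (comp n x (Suc c mod n))) (Suc c mod n) j)"
      using comp_pCons0[OF npos, of c] c by simp
  qed simp
  also have "\<dots> = pCons 0 (\<Sum>c<n. comp n (Pm \<beta> (comp n x (Suc c mod n))) (Suc c mod n) j)"
    by (simp add: pCons0_sum)
  also have "\<dots> = pCons 0 (Pp \<beta> x j)"
    unfolding Pp_def using sum_rot[OF npos, of "\<lambda>c. comp n (Pm \<beta> (comp n x c)) c j"] by simp
  finally show "Pp \<beta> (\<lambda>j. pCons 0 (x j)) j = pCons 0 (Pp \<beta> x j)" .
qed

lemma Pp_mult: "Pp \<beta> (\<lambda>j. p * x j) = (\<lambda>j. p * Pp \<beta> x j)"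
proof (induction p)
  case 0
  then show ?case using Pp_zero by simp
next
  case (pCons e p)
  have "Pp \<beta> (\<lambda>j. pCons e p * x j) = Pp \<beta> (\<lambda>j. smult e (x j) + pCons 0 (p * x j))" by simp
  also have "\<dots> = (\<lambda>j. smult e (Pp \<beta> x j) + pCons 0 (p * Pp \<beta> x j))"
    by (simp add: Pp_add Pp_smult Pp_pCons0 pCons.IH)
  also have "\<dots> = (\<lambda>j. pCons e p * Pp \<beta> x j)" by simp
  finally show ?case .
qed

lemma Pp_sum: "finite K \<Longrightarrow> Pp \<beta> (\<lambda>j. \<Sum>k\<in>K. x k j) = (\<lambda>j. \<Sum>k\<in>K. Pp \<beta> (x k) j)"
proof (induction K rule: finite_induct)
  case empty
  then show ?case using Pp_zero by simp
next
  case (insert k K)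
  then show ?case using Pp_add[of \<beta> "x k" "\<lambda>j. \<Sum>k\<in>K. x k j"] by simp
qed

lemma Pp_comp: "c < n \<Longrightarrow> Pp \<beta> (comp n y c) = comp n (Pp \<beta> y) c"
proof (rule ext)
  fix j assume c: "c < n"
  have "Pp \<beta> (comp n y c) j = (\<Sum>d<n. if c = d then comp n (Pm \<beta> (comp n y c)) d j else 0)"
    unfolding Pp_def
    by (rule sum.cong) (auto simp: comp_comp_fun Pm_zero comp_zero)
  also have "\<dots> = comp n (Pm \<beta> (comp n y c)) c j" using c by simp
  also have "\<dots> = (\<Sum>d<n. comp n (comp n (Pm \<beta> (comp n y d)) d) c j)"
  proof -
    have "(\<Sum>d<n. comp n (comp n (Pm \<beta> (comp n y d)) d) c j) =
          (\<Sum>d<n. if d = c then comp n (Pm \<beta> (comp n y c)) c j else 0)"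
      by (rule sum.cong) (auto simp: comp_comp)
    then show ?thesis using c by simp
  qed
  also have "\<dots> = comp n (Pp \<beta> y) c j"
    unfolding Pp_def by (rule comp_sumf[symmetric])
  finally show "Pp \<beta> (comp n y c) j = comp n (Pp \<beta> y) c j" .
qed

lemma Pp_q:
  assumes beta: "\<forall>a\<in>S. \<forall>a'\<in>S. (\<Sum>i<n. q a i * \<beta> i a') = (if a = a' then 1 else 0)"
  shows "Pp \<beta> (q a) = q a"
proof (cases "a \<in> S")
  case True
  then have an: "a < n" using S_sub by auto
  have Pq: "Pm \<beta> (q a) = q a"
  proof (rule ext)
    fix j
    have "Pm \<beta> (q a) j = (\<Sum>a'\<in>S. (if a' \<in> S then (\<Sum>i<n. q a i * \<beta> i a') else 0) * q a' j)"
      unfolding Pm_def lcomb_S by simp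
    also have "\<dots> = (\<Sum>a'\<in>S. if a' = a then q a' j else 0)"
      by (rule sum.cong) (use beta True in auto)
    also have "\<dots> = q a j" using True S_fin by simp
    finally show "Pm \<beta> (q a) j = q a j" .
  qed
  show ?thesis
  proof (rule ext)
    fix j
    have "Pp \<beta> (q a) j = (\<Sum>c<n. if a = c then comp n (q a) c j else 0)"
      unfolding Pp_def by (rule sum.cong) (auto simp: comp_comp_fun Pm_zero comp_zero Pq)
    also have "\<dots> = comp n (q a) a j" using an by simp
    also have "\<dots> = q a j" by (simp add: comp_comp)
    finally show "Pp \<beta> (q a) j = q a j" .
  qed
next
  case False
  then show ?thesis using q_out Pp_zero by simp
qed

lemma Pp_id:
  assumes beta: "\<forall>a\<in>S. \<forall>a'\<in>S. (\<Sum>i<n. q a i * \<beta> i a') = (if a = a' then 1 else 0)"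
    and x: "x \<in> I"
  shows "Pp \<beta> x = x"
proof -
  obtain f where xf: "x = lcomb n q f" using x by auto
  have "Pp \<beta> x = (\<lambda>j. \<Sum>a<n. Pp \<beta> (\<lambda>j. f a * q a j) j)"
    unfolding xf lcomb_def by (rule Pp_sum) simp
  also have "\<dots> = (\<lambda>j. \<Sum>a<n. f a * q a j)"
    by (simp add: Pp_mult Pp_q[OF beta])
  finally show ?thesis unfolding xf lcomb_def .
qed

lemma RI_ring:
  assumes "RI"
  shows "direct_summand_ring n I"
proof -
  obtain \<beta> where beta: "\<forall>a\<in>S. \<forall>a'\<in>S. (\<Sum>i<n. q a i * \<beta> i a') = (if a = a' then 1 else 0)"
    using assms unfolding RI_def by blast
  define J where "J = {h \<in> skp n. Pp \<beta> h = (\<lambda>j. 0)}"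
  have Jl: "is_left_ideal n J"
    unfolding is_left_ideal_def
  proof (intro conjI ballI)
    show "J \<subseteq> skp n" unfolding J_def by auto
    show "skzero \<in> J" unfolding J_def skzero_def skp_def using Pp_zero by auto
    fix x y :: "nat \<Rightarrow> 'a poly" assume x: "x \<in> J"
    { assume y: "y \<in> J"
      then show "skadd x y \<in> J" using x unfolding J_def skadd_def skp_def by (auto simp: Pp_add) }
    { assume f: "y \<in> skp n"
      have sk: "skmult n y x \<in> skp n" unfolding skp_def skmult_def by auto
      have "Pp \<beta> (skmult n y x) = (\<lambda>j. \<Sum>i<n. y i * Pp \<beta> (comp n x i) j)"
        unfolding skmult_comp_fun[OF npos] by (simp add: Pp_sum Pp_mult)
      also have "\<dots> = (\<lambda>j. 0)"
        using x unfolding J_def by (auto simp: Pp_comp comp_zero)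
      finally show "skmult n y x \<in> J" using sk unfolding J_def by auto }
  qed
  have "internal_direct_sum n I J"
    unfolding internal_direct_sum_def
  proof
    show "I \<inter> J = {skzero}"
    proof
      show "I \<inter> J \<subseteq> {skzero}"
      proof
        fix x assume "x \<in> I \<inter> J"
        then have "x = Pp \<beta> x" "Pp \<beta> x = (\<lambda>j. 0)" using Pp_id[OF beta] unfolding J_def by auto
        then show "x \<in> {skzero}" unfolding skzero_def by simp
      qed
      show "{skzero} \<subseteq> I \<inter> J" using I_zero Jl unfolding is_left_ideal_def skzero_def by auto
    qed
    show "{skadd x y |x y. x \<in> I \<and> y \<in> J} = skp n"
    proof
      show "{skadd x y |x y. x \<in> I \<and> y \<in> J} \<subseteq> skp n"
        using I_skp unfolding J_def skadd_def skp_def by auto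
      show "skp n \<subseteq> {skadd x y |x y. x \<in> I \<and> y \<in> J}"
      proof
        fix h :: "nat \<Rightarrow> 'a poly" assume h: "h \<in> skp n"
        let ?x = "Pp \<beta> h" and ?y = "\<lambda>j. h j - Pp \<beta> h j"
        have xI: "?x \<in> I" by (rule Pp_I)
        have "Pp \<beta> ?y = (\<lambda>j. Pp \<beta> h j + (-1) * Pp \<beta> (Pp \<beta> h) j)"
          using Pp_add[of \<beta> h "\<lambda>j. (-1) * Pp \<beta> h j"] Pp_mult[of \<beta> "-1" "Pp \<beta> h"] by simp
        also have "\<dots> = (\<lambda>j. 0)" using Pp_id[OF beta xI] by simp
        finally have "?y \<in> J" unfolding J_def using h xI I_skp unfolding skp_def by auto
        moreover have "skadd ?x ?y = h" unfolding skadd_def by simp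
        ultimately show "h \<in> {skadd x y |x y. x \<in> I \<and> y \<in> J}" using xI
          by (intro CollectI exI[of _ "?x"] exI[of _ "?y"]) simp
      qed
    qed
  qed
  then show ?thesis using Jl unfolding direct_summand_ring_def by blast
qed


lemma lcomb_diff: "(\<lambda>j. lcomb n q f j - lcomb n q f' j) = lcomb n q (\<lambda>a. f a - f' a)"
  unfolding lcomb_def by (rule ext) (simp add: sum_subtractf left_diff_distrib)

lemma Fz_RI:
  assumes ind: indep and ds: "direct_summand_Fz n I"
  shows RI
proof -
  obtain N where N: "is_Fz_submodule n N" "internal_direct_sum n I N"
    using ds unfolding direct_summand_Fz_def by blast
  have N0: "(\<lambda>j. 0) \<in> N" using N(1) unfolding is_Fz_submodule_def skzero_def by auto
  have Nadd: "\<And>x y. x \<in> N \<Longrightarrow> y \<in> N \<Longrightarrow> (\<lambda>j. x j + y j) \<in> N"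
    using N(1) unfolding is_Fz_submodule_def skadd_def by auto
  have Nmult: "\<And>x p. x \<in> N \<Longrightarrow> (\<lambda>j. p * x j) \<in> N"
    using N(1) unfolding is_Fz_submodule_def sksmult_def by auto
  have Nsum: "\<And>K x. finite K \<Longrightarrow> (\<forall>k\<in>K. x k \<in> N) \<Longrightarrow> (\<lambda>j. \<Sum>k\<in>K. x k j) \<in> N"
  proof -
    fix K :: "'b set" and x assume "finite K" "\<forall>k\<in>K. x k \<in> N"
    then show "(\<lambda>j. \<Sum>k\<in>K. x k j) \<in> N"
    proof (induction K rule: finite_induct)
      case empty then show ?case using N0 by simp
    next
      case (insert k K) then show ?case using Nadd[of "x k" "\<lambda>j. \<Sum>k\<in>K. x k j"] by simp
    qed
  qed
  have IN: "\<And>x. x \<in> I \<Longrightarrow> x \<in> N \<Longrightarrow> x = (\<lambda>j. 0)"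
    using N(2) unfolding internal_direct_sum_def skzero_def by auto
  define eps :: "nat \<Rightarrow> nat \<Rightarrow> 'a poly" where "eps i = (\<lambda>j. if j = i then 1 else 0)" for i
  have "\<forall>i\<in>{..<n}. \<exists>f. \<exists>v. v \<in> N \<and> eps i = skadd (lcomb n q f) v"
  proof
    fix i assume "i \<in> {..<n}"
    then have "eps i \<in> skp n" unfolding eps_def skp_def by auto
    then have "eps i \<in> {skadd x y |x y. x \<in> I \<and> y \<in> N}" using N(2) unfolding internal_direct_sum_def by auto
    then show "\<exists>f. \<exists>v. v \<in> N \<and> eps i = skadd (lcomb n q f) v" by blast
  qed
  then obtain Lam where "\<forall>i\<in>{..<n}. \<exists>v. v \<in> N \<and> eps i = skadd (lcomb n q (Lam i)) v"
    by (metis bchoice)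
  then obtain V where LV: "\<forall>i\<in>{..<n}. V i \<in> N \<and> eps i = skadd (lcomb n q (Lam i)) (V i)"
    by (metis bchoice)
  have "\<forall>a\<in>S. \<forall>a'\<in>S. (\<Sum>i<n. q a i * Lam i a') = (if a = a' then 1 else 0)"
  proof
    fix a assume aS: "a \<in> S"
    then have an: "a < n" using S_sub by auto
    let ?c = "\<lambda>a'. \<Sum>i<n. q a i * Lam i a'"
    let ?w = "\<lambda>j. \<Sum>i<n. q a i * V i j"
    have qa: "q a j = (\<Sum>i<n. q a i * eps i j)" for j
    proof (cases "j < n")
      case True
      have "(\<Sum>i<n. q a i * eps i j) = (\<Sum>i<n. if i = j then q a i else 0)"
        by (rule sum.cong) (auto simp: eps_def)
      then show ?thesis using True by simp
    next
      case False
      then show ?thesis by (simp add: eps_def comp_ge)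
    qed
    have dec: "q a j = lcomb n q ?c j + ?w j" for j
    proof -
      have "q a j = (\<Sum>i<n. q a i * eps i j)" by (rule qa)
      also have "\<dots> = (\<Sum>i<n. q a i * (lcomb n q (Lam i) j + V i j))"
      proof (rule sum.cong)
        fix i assume "i \<in> {..<n}"
        then have "eps i = skadd (lcomb n q (Lam i)) (V i)" using LV by blast
        then have "eps i j = lcomb n q (Lam i) j + V i j" unfolding skadd_def by simp
        then show "q a i * eps i j = q a i * (lcomb n q (Lam i) j + V i j)" by simp
      qed simp
      also have "\<dots> = (\<Sum>i<n. q a i * lcomb n q (Lam i) j) + ?w j"
        by (simp add: distrib_left sum.distrib)
      also have "(\<Sum>i<n. q a i * lcomb n q (Lam i) j) = lcomb n q ?c j"
      proof -
        have "(\<Sum>i<n. q a i * lcomb n q (Lam i) j) = (\<Sum>i<n. \<Sum>b<n. q a i * Lam i b * q b j)"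
          unfolding lcomb_def by (simp add: sum_distrib_left mult.assoc)
        also have "\<dots> = (\<Sum>b<n. \<Sum>i<n. q a i * Lam i b * q b j)" by (rule sum.swap)
        also have "\<dots> = lcomb n q ?c j"
          unfolding lcomb_def by (simp add: sum_distrib_right)
        finally show ?thesis .
      qed
      finally show ?thesis .
    qed
    have wN: "?w \<in> N"
    proof (rule Nsum)
      show "\<forall>i\<in>{..<n}. (\<lambda>j. q a i * V i j) \<in> N"
      proof
        fix i assume "i \<in> {..<n}"
        then have "V i \<in> N" using LV by blast
        then show "(\<lambda>j. q a i * V i j) \<in> N" by (rule Nmult)
      qed
    qed simp
    have qaI: "q a = lcomb n q (\<lambda>b. if b = a then 1 else 0)"
    proof (rule ext)
      fix j
      have "(\<Sum>b<n. (if b = a then 1 else 0) * q b j) = (\<Sum>b<n. if b = a then q b j else 0)"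
        by (rule sum.cong) auto
      then show "q a j = lcomb n q (\<lambda>b. if b = a then 1 else 0) j" unfolding lcomb_def using an by simp
    qed
    have qaj: "lcomb n q (\<lambda>b. if b = a then 1 else 0) j = q a j" for j
      by (rule fun_cong[OF qaI, symmetric])
    have "?w = (\<lambda>j. lcomb n q (\<lambda>b. if b = a then 1 else 0) j - lcomb n q ?c j)"
    proof (rule ext)
      fix j
      have "?w j = q a j - lcomb n q ?c j" using dec[of j] by (simp add: algebra_simps)
      then show "?w j = lcomb n q (\<lambda>b. if b = a then 1 else 0) j - lcomb n q ?c j" by (simp only: qaj)
    qed
    also have "\<dots> = lcomb n q (\<lambda>b. (if b = a then 1 else 0) - ?c b)" by (rule lcomb_diff)
    finally have "?w \<in> I" by simp
    then have w0: "?w = (\<lambda>j. 0)" using IN wN by blast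
    have "\<forall>j. (\<Sum>b\<in>S. (?c b - (if b = a then 1 else 0)) * q b j) = 0"
    proof
      fix j
      have "(\<Sum>b\<in>S. (?c b - (if b = a then 1 else 0)) * q b j) = lcomb n q (\<lambda>b. ?c b - (if b = a then 1 else 0)) j"
        by (simp add: lcomb_S)
      also have "\<dots> = lcomb n q ?c j - lcomb n q (\<lambda>b. if b = a then 1 else 0) j"
        using fun_cong[OF lcomb_diff[of ?c "\<lambda>b. if b = a then 1 else 0"], of j] by simp
      also have "\<dots> = 0"
      proof -
        have "?w j = 0" using w0 by (rule fun_cong)
        then have "q a j = lcomb n q ?c j" using dec[of j] by simp
        then show ?thesis by (simp only: qaj) simp
      qed
      finally show "(\<Sum>b\<in>S. (?c b - (if b = a then 1 else 0)) * q b j) = 0" .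
    qed
    then have "\<forall>b\<in>S. ?c b - (if b = a then 1 else 0) = 0"
      using ind unfolding indep_def by (rule_tac mp[OF spec[of _ "\<lambda>b. ?c b - (if b = a then 1 else 0)"]])
    then show "\<forall>a'\<in>S. ?c a' = (if a = a' then 1 else 0)" by auto
  qed
  then show ?thesis unfolding RI_def by blast
qed


lemma shiftpos_inj:
  assumes "j < n" "j' < n" "shiftpos n l j = shiftpos n l j'"
  shows "j = j'"
proof -
  have h: "(int j - int l) mod int n = (int j' - int l) mod int n"
    using arg_cong[OF assms(3), of int] by (simp add: shiftpos_int[OF npos])
  have "(int j - int l + int l) mod int n = ((int j - int l) mod int n + int l) mod int n"
    by (simp add: mod_add_left_eq)
  also have "\<dots> = ((int j' - int l) mod int n + int l) mod int n" using h by simp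
  also have "\<dots> = (int j' - int l + int l) mod int n" by (simp add: mod_add_left_eq)
  finally have "(int j - int l + int l) mod int n = (int j' - int l + int l) mod int n" .
  then have "int j mod int n = int j' mod int n" by simp
  then show ?thesis using assms(1,2) by (simp add: zmod_int)
qed

lemma coeff_q_pos: "coeff (q a j) l \<noteq> 0 \<Longrightarrow> j < n \<and> shiftpos n l j = a"
  by (auto simp: coeff_comp split: if_splits)

definition dq :: "nat \<Rightarrow> nat" where "dq a = skdeg n (q a)"

lemma dq_ge: "j < n \<Longrightarrow> degree (q a j) \<le> dq a"
  unfolding dq_def skdeg_def by (intro Max_ge) auto

lemma dq_attained:
  assumes "a \<in> S"
  shows "\<exists>i<n. q a i \<noteq> 0 \<and> degree (q a i) = dq a"
proof -
  from assms obtain j where j0: "q a j \<noteq> 0"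
    unfolding supp_def skzero_def by (auto simp: fun_eq_iff)
  have "j < n" using j0 comp_ge[of n j g a] by (cases "j < n") auto
  note j = this j0
  show ?thesis
  proof (cases "degree (q a j) = dq a")
    case True then show ?thesis using j by blast
  next
    case False
    then have lt: "degree (q a j) < dq a" using dq_ge[OF j(1), of a] by simp
    have "dq a \<in> insert 0 (degree ` q a ` {..<n})"
      unfolding dq_def skdeg_def by (intro Max_in) auto
    then obtain i where "i < n" "degree (q a i) = dq a" using lt by auto
    moreover then have "q a i \<noteq> 0" using lt by auto
    ultimately show ?thesis by blast
  qed
qed

definition ia :: "nat \<Rightarrow> nat" where
  "ia a = (SOME i. i < n \<and> q a i \<noteq> 0 \<and> degree (q a i) = dq a)"

lemma ia: "a \<in> S \<Longrightarrow> ia a < n \<and> q a (ia a) \<noteq> 0 \<and> degree (q a (ia a)) = dq a"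
  unfolding ia_def by (rule someI_ex) (rule dq_attained)

lemma coeff_dq_other:
  assumes "a \<in> S" "j \<noteq> ia a"
  shows "coeff (q a j) (dq a) = 0"
proof (rule ccontr)
  assume "coeff (q a j) (dq a) \<noteq> 0"
  then have j: "j < n" "shiftpos n (dq a) j = a" using coeff_q_pos by auto
  have nz: "q a (ia a) \<noteq> 0" and dg: "degree (q a (ia a)) = dq a" using ia[OF assms(1)] by auto
  have "lead_coeff (q a (ia a)) \<noteq> 0" using nz by simp
  then have "coeff (q a (ia a)) (dq a) \<noteq> 0" using dg by simp
  then have "shiftpos n (dq a) (ia a) = a" using coeff_q_pos by auto
  then have "j = ia a" using shiftpos_inj[of j "ia a" "dq a"] j ia[OF assms(1)] by simp
  then show False using assms(2) by simp
qed

lemma lc_ideal: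
  assumes "a \<in> S"
  shows "in_ideal_e n (sklc n (q a)) (ia a)"
  unfolding in_ideal_e_def sklc_def using coeff_dq_other[OF assms] unfolding dq_def by auto

lemma ia_inj:
  assumes sr: "semi_reduced n g" and "a \<in> S" "b \<in> S" "a \<noteq> b"
  shows "ia a \<noteq> ia b"
proof
  assume e: "ia a = ia b"
  have "\<exists>i<n. in_ideal_e n (sklc n (q a)) i \<and> in_ideal_e n (sklc n (q b)) i"
    using lc_ideal[OF assms(2)] lc_ideal[OF assms(3)] ia[OF assms(2)] e
    by (intro exI[of _ "ia a"]) auto
  then show False using sr assms(2-4) unfolding semi_reduced_def by blast
qed

lemma indep_semi:
  assumes sr: "semi_reduced n g"
  shows indep
  unfolding indep_def
proof (intro allI impI ballI)
  fix lam :: "nat \<Rightarrow> 'a poly" and a0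
  assume h: "\<forall>j. (\<Sum>a\<in>S. lam a * q a j) = 0" and a0S: "a0 \<in> S"
  show "lam a0 = 0"
  proof (rule ccontr)
    assume nz: "lam a0 \<noteq> 0"
    define T where "T = {a \<in> S. lam a \<noteq> 0}"
    have Tf: "finite T" using S_fin unfolding T_def by auto
    have a0T: "a0 \<in> T" using a0S nz unfolding T_def by auto
    define D where "D = Max ((\<lambda>a. degree (lam a) + dq a) ` T)"
    have Dge: "\<And>a. a \<in> T \<Longrightarrow> degree (lam a) + dq a \<le> D"
      unfolding D_def using Tf by (intro Max_ge) auto
    have "D \<in> (\<lambda>a. degree (lam a) + dq a) ` T" unfolding D_def using Tf a0T by (intro Max_in) auto
    then obtain a1 where a1: "a1 \<in> T" "D = degree (lam a1) + dq a1" by auto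
    have a1S: "a1 \<in> S" and l1: "lam a1 \<noteq> 0" using a1(1) unfolding T_def by auto
    define i0 where "i0 = ia a1"
    have ia1: "i0 < n" "q a1 i0 \<noteq> 0" "degree (q a1 i0) = dq a1" using ia[OF a1S] unfolding i0_def by auto
    have other: "coeff (lam a * q a i0) D = 0" if aS: "a \<in> S" and ne: "a \<noteq> a1" for a
    proof (cases "lam a = 0 \<or> q a i0 = 0")
      case True then show ?thesis by auto
    next
      case False
      then have aT: "a \<in> T" using aS unfolding T_def by auto
      have "i0 \<noteq> ia a" using ia_inj[OF sr a1S aS] ne unfolding i0_def by auto
      then have c0: "coeff (q a i0) (dq a) = 0" using coeff_dq_other[OF aS] by auto
      have "degree (q a i0) \<le> dq a" using dq_ge ia1(1) by auto
      moreover have "degree (q a i0) \<noteq> dq a"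
      proof
        assume "degree (q a i0) = dq a"
        then have "lead_coeff (q a i0) = 0" using c0 by simp
        then show False using False by simp
      qed
      ultimately have "degree (q a i0) < dq a" by simp
      then have "degree (lam a * q a i0) < D"
        using degree_mult_le[of "lam a" "q a i0"] Dge[OF aT] by linarith
      then show ?thesis by (rule coeff_eq_0)
    qed
    have "coeff (\<Sum>a\<in>S. lam a * q a i0) D = (\<Sum>a\<in>S. coeff (lam a * q a i0) D)"
      by (rule coeff_sum)
    also have "\<dots> = (\<Sum>a\<in>S. if a = a1 then coeff (lam a1 * q a1 i0) D else 0)"
      by (rule sum.cong) (auto simp: other)
    also have "\<dots> = coeff (lam a1 * q a1 i0) D" using a1S S_fin by simp
    also have "\<dots> = lead_coeff (lam a1) * lead_coeff (q a1 i0)"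
      unfolding a1(2) ia1(3)[symmetric] by (rule coeff_mult_degree_sum)
    also have "\<dots> \<noteq> 0" using l1 ia1(2) by simp
    finally show False using h by simp
  qed
qed

end




lemma idx_lt:
  fixes J :: "nat set"
  assumes "finite J" "i \<in> J"
  shows "card {a\<in>J. a < i} < card J"
proof (rule psubset_card_mono)
  show "finite J" by fact
  have "i \<notin> {a\<in>J. a < i}" by simp
  then show "{a\<in>J. a < i} \<subset> J" using assms(2) by blast
qed

lemma pick_bij:
  assumes "finite J"
  shows "bij_betw (pick J) {..<card J} J"
proof (rule bij_betw_imageI)
  show "inj_on (pick J) {..<card J}"
  proof (rule inj_onI)
    fix x y assume xy: "x \<in> {..<card J}" "y \<in> {..<card J}" "pick J x = pick J y"
    show "x = y"
    proof (rule ccontr)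
      assume "x \<noteq> y"
      then have "x < y \<or> y < x" by auto
      then show False using pick_mono_le[of x J y] pick_mono_le[of y J x] xy by auto
    qed
  qed
  show "pick J ` {..<card J} = J"
  proof
    show "pick J ` {..<card J} \<subseteq> J" using pick_in_set_le by auto
    show "J \<subseteq> pick J ` {..<card J}"
    proof
      fix i assume i: "i \<in> J"
      have "pick J (card {a\<in>J. a < i}) = i" by (rule pick_card_in_set[OF i])
      moreover have "card {a\<in>J. a < i} < card J" by (rule idx_lt[OF assms i])
      ultimately show "i \<in> pick J ` {..<card J}" by force
    qed
  qed
qed

lemma sum_pick:
  assumes "finite J"
  shows "(\<Sum>t<card J. F (pick J t)) = (\<Sum>i\<in>J. F i)"
  using sum.reindex_bij_betw[OF pick_bij[OF assms], of F] by simp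

lemma submatrix_cols:
  assumes Y: "Y \<in> carrier_mat r m" and J: "J \<subseteq> {..<m}"
  shows "submatrix Y UNIV J \<in> carrier_mat r (card J)"
    "\<And>l t. l < r \<Longrightarrow> t < card J \<Longrightarrow> submatrix Y UNIV J $$ (l,t) = Y $$ (l, pick J t)"
proof -
  have c1: "card {i. i < dim_row Y \<and> i \<in> UNIV} = r" using Y by simp
  have c2: "card {j. j < dim_col Y \<and> j \<in> J} = card J"
  proof -
    have "{j. j < dim_col Y \<and> j \<in> J} = J" using Y J by auto
    then show ?thesis by simp
  qed
  show "submatrix Y UNIV J \<in> carrier_mat r (card J)"
    unfolding carrier_mat_def using dim_submatrix[of Y UNIV J] c1 c2 by simp
  fix l t assume "l < r" "t < card J"
  then show "submatrix Y UNIV J $$ (l,t) = Y $$ (l, pick J t)"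
    using submatrix_index[of l Y UNIV t J] c1 c2 pick_UNIV by simp
qed

lemma adj_right_inverse:
  fixes Y :: "'b::comm_ring_1 mat"
  assumes Y: "Y \<in> carrier_mat r m"
    and u: "(\<Sum>J\<in>{J. J \<subseteq> {..<m} \<and> card J = r}. u J * det (submatrix Y UNIV J)) = 1"
  shows "\<exists>\<beta>. \<forall>l<r. \<forall>k<r. (\<Sum>i<m. Y $$ (l,i) * \<beta> i k) = (if l = k then 1 else 0)"
proof -
  define Js where "Js = {J. J \<subseteq> {..<m} \<and> card J = r}"
  have Jsf: "finite Js" unfolding Js_def by (rule finite_subset[of _ "Pow {..<m}"]) auto
  define YJ where "YJ J = submatrix Y UNIV J" for J
  define \<beta> where "\<beta> i k = (\<Sum>J\<in>Js. u J * (if i \<in> J then adj_mat (YJ J) $$ (card {a\<in>J. a < i}, k) else 0))" for i k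
  have key: "(\<Sum>i<m. Y $$ (l,i) * (if i \<in> J then adj_mat (YJ J) $$ (card {a\<in>J. a < i}, k) else 0))
      = (if l = k then det (YJ J) else 0)" if J: "J \<in> Js" and l: "l < r" and k: "k < r" for J l k
  proof -
    have Jm: "J \<subseteq> {..<m}" and cJ: "card J = r" using J unfolding Js_def by auto
    have fJ: "finite J" using Jm finite_subset by blast
    have YJc: "YJ J \<in> carrier_mat r r" using submatrix_cols(1)[OF Y Jm] cJ unfolding YJ_def by simp
    have "(\<Sum>i<m. Y $$ (l,i) * (if i \<in> J then adj_mat (YJ J) $$ (card {a\<in>J. a < i}, k) else 0))
        = (\<Sum>i\<in>J. Y $$ (l,i) * adj_mat (YJ J) $$ (card {a\<in>J. a < i}, k))"
    proof -
      have "(\<Sum>i<m. Y $$ (l,i) * (if i \<in> J then adj_mat (YJ J) $$ (card {a\<in>J. a < i}, k) else 0))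
         = (\<Sum>i<m. if i \<in> J then Y $$ (l,i) * adj_mat (YJ J) $$ (card {a\<in>J. a < i}, k) else 0)"
        by (rule sum.cong) auto
      also have "\<dots> = (\<Sum>i\<in>{..<m} \<inter> J. Y $$ (l,i) * adj_mat (YJ J) $$ (card {a\<in>J. a < i}, k))"
        by (simp add: sum.inter_restrict)
      also have "{..<m} \<inter> J = J" using Jm by auto
      finally show ?thesis .
    qed
    also have "\<dots> = (\<Sum>t<card J. Y $$ (l, pick J t) * adj_mat (YJ J) $$ (card {a\<in>J. a < pick J t}, k))"
      by (rule sum_pick[OF fJ, symmetric])
    also have "\<dots> = (\<Sum>t<r. YJ J $$ (l, t) * adj_mat (YJ J) $$ (t, k))"
      using cJ card_pick_le[of _ J] submatrix_cols(2)[OF Y Jm] l unfolding YJ_def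
      by (intro sum.cong) auto
    also have "\<dots> = (YJ J * adj_mat (YJ J)) $$ (l,k)"
      using YJc adj_mat(1)[OF YJc] l k by (simp add: scalar_prod_def times_mat_def atLeast0LessThan)
    also have "\<dots> = (if l = k then det (YJ J) else 0)"
      using adj_mat(2)[OF YJc] l k by simp
    finally show ?thesis .
  qed
  have "(\<Sum>i<m. Y $$ (l,i) * \<beta> i k) = (if l = k then 1 else 0)" if l: "l < r" and k: "k < r" for l k
  proof -
    have "(\<Sum>i<m. Y $$ (l,i) * \<beta> i k)
        = (\<Sum>J\<in>Js. u J * (\<Sum>i<m. Y $$ (l,i) * (if i \<in> J then adj_mat (YJ J) $$ (card {a\<in>J. a < i}, k) else 0)))"
      unfolding \<beta>_def by (simp add: sum_distrib_left sum_distrib_right mult_ac sum.swap[of _ Js])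
    also have "\<dots> = (\<Sum>J\<in>Js. u J * (if l = k then det (YJ J) else 0))"
      using key l k by (intro sum.cong) auto
    also have "\<dots> = (if l = k then 1 else 0)"
      using u unfolding Js_def YJ_def by auto
    finally show ?thesis .
  qed
  then show ?thesis by blast
qed


lemma minor_dvd_cols:
  fixes Y :: "'b::comm_ring_1 mat"
  assumes Y: "Y \<in> carrier_mat r m"
    and d: "\<forall>J. J \<subseteq> {..<m} \<and> card J = r \<longrightarrow> d dvd det (submatrix Y UNIV J)"
    and f: "\<forall>k<r. f k < m"
  shows "d dvd det (mat\<^sub>r r r (\<lambda>k. col Y (f k)))"
proof (cases "inj_on f {..<r}")
  case False
  then obtain k1 k2 where k: "k1 < r" "k2 < r" "k1 \<noteq> k2" "f k1 = f k2"
    unfolding inj_on_def by auto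
  have "det (mat\<^sub>r r r (\<lambda>k. col Y (f k))) = 0"
  proof (rule det_identical_rows[OF _ k(3) k(1) k(2)])
    show "mat\<^sub>r r r (\<lambda>k. col Y (f k)) \<in> carrier_mat r r" by simp
    show "row (mat\<^sub>r r r (\<lambda>k. col Y (f k))) k1 = row (mat\<^sub>r r r (\<lambda>k. col Y (f k))) k2"
      using k Y by (auto intro!: eq_vecI)
  qed
  then show ?thesis by simp
next
  case True
  define J where "J = f ` {..<r}"
  have Jm: "J \<subseteq> {..<m}" using f unfolding J_def by auto
  have cJ: "card J = r" unfolding J_def using card_image[OF True] by simp
  have fJ: "finite J" unfolding J_def by simp
  define p where "p k = (if k < r then card {a\<in>J. a < f k} else k)" for k
  have p_lt: "k < r \<Longrightarrow> p k < r" for k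
    unfolding p_def using idx_lt[OF fJ, of "f k"] cJ unfolding J_def by auto
  have pick_p: "k < r \<Longrightarrow> pick J (p k) = f k" for k
    unfolding p_def using pick_card_in_set[of "f k" J] unfolding J_def by auto
  have inj: "inj_on p {0..<r}"
  proof (rule inj_onI)
    fix x y assume "x \<in> {0..<r}" "y \<in> {0..<r}" "p x = p y"
    then have "f x = f y" using pick_p by (metis atLeastLessThan_iff)
    then show "x = y" using True \<open>x \<in> {0..<r}\<close> \<open>y \<in> {0..<r}\<close> unfolding inj_on_def by auto
  qed
  have "p ` {0..<r} = {0..<r}"
    by (rule endo_inj_surj) (use inj p_lt in auto)
  then have pp: "p permutes {0..<r}"
    using inj by (intro bij_imp_permutes) (auto simp: bij_betw_def p_def)
  define T where "T = transpose_mat (submatrix Y UNIV J)"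
  have SJ: "submatrix Y UNIV J \<in> carrier_mat r r" using submatrix_cols(1)[OF Y Jm] cJ by simp
  have Tc: "T \<in> carrier_mat r r" unfolding T_def using SJ by simp
  have "mat\<^sub>r r r (\<lambda>k. col Y (f k)) = mat r r (\<lambda>(i,j). T $$ (p i, j))"
  proof (rule eq_matI)
    fix i j assume ij: "i < dim_row (mat r r (\<lambda>(i,j). T $$ (p i, j)))" "j < dim_col (mat r r (\<lambda>(i,j). T $$ (p i, j)))"
    then have i: "i < r" and j: "j < r" by auto
    have "T $$ (p i, j) = submatrix Y UNIV J $$ (j, p i)" unfolding T_def using SJ p_lt[OF i] j by simp
    also have "\<dots> = Y $$ (j, f i)" using submatrix_cols(2)[OF Y Jm j] p_lt[OF i] cJ pick_p[OF i] by simp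
    finally show "mat\<^sub>r r r (\<lambda>k. col Y (f k)) $$ (i, j) = mat r r (\<lambda>(i,j). T $$ (p i, j)) $$ (i, j)"
      using i j Y f by simp
  qed auto
  then have "det (mat\<^sub>r r r (\<lambda>k. col Y (f k))) = signof p * det T"
    using det_permute_rows[OF Tc pp] by simp
  also have "det T = det (submatrix Y UNIV J)" unfolding T_def by (rule det_transpose[OF SJ])
  finally show ?thesis using d Jm cJ by simp
qed

lemma right_inverse_minors_dvd:
  fixes Y :: "'b::comm_ring_1 mat"
  assumes Y: "Y \<in> carrier_mat r m"
    and beta: "\<forall>l<r. \<forall>k<r. (\<Sum>i<m. Y $$ (l,i) * \<beta> i k) = (if l = k then 1 else 0)"
    and d: "\<forall>J. J \<subseteq> {..<m} \<and> card J = r \<longrightarrow> d dvd det (submatrix Y UNIV J)"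
  shows "d dvd 1"
proof -
  define a where "a k i = \<beta> i k \<cdot>\<^sub>v col Y i" for k i
  have ac: "a \<in> {0..<r} \<rightarrow> {0..<m} \<rightarrow> carrier_vec r" unfolding a_def using Y by auto
  have "1\<^sub>m r = mat\<^sub>r r r (\<lambda>k. finsum_vec TYPE('b) r (a k) {0..<m})"
  proof (rule eq_matI)
    fix k l assume "k < dim_row (mat\<^sub>r r r (\<lambda>k. finsum_vec TYPE('b) r (a k) {0..<m}))"
      "l < dim_col (mat\<^sub>r r r (\<lambda>k. finsum_vec TYPE('b) r (a k) {0..<m}))"
    then have k: "k < r" and l: "l < r" by auto
    have "mat\<^sub>r r r (\<lambda>k. finsum_vec TYPE('b) r (a k) {0..<m}) $$ (k,l) = finsum_vec TYPE('b) r (a k) {0..<m} $ l"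
      using k l by simp
    also have "\<dots> = (\<Sum>i\<in>{0..<m}. a k i $ l)"
      by (rule index_finsum_vec) (use ac k l in auto)
    also have "\<dots> = (\<Sum>i<m. Y $$ (l,i) * \<beta> i k)"
      unfolding a_def using Y l by (auto simp: atLeast0LessThan mult.commute intro!: sum.cong)
    also have "\<dots> = (if l = k then 1 else 0)" using beta k l by simp
    finally show "1\<^sub>m r $$ (k, l) = mat\<^sub>r r r (\<lambda>k. finsum_vec TYPE('b) r (a k) {0..<m}) $$ (k, l)"
      using k l by auto
  qed auto
  then have "1 = det (mat\<^sub>r r r (\<lambda>k. finsum_vec TYPE('b) r (a k) {0..<m}))" by (metis det_one)
  also have "\<dots> = (\<Sum>f\<in>{f. (\<forall>i\<in>{0..<r}. f i \<in> {0..<m}) \<and> (\<forall>i. i \<notin> {0..<r} \<longrightarrow> f i = i)}.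
        det (mat\<^sub>r r r (\<lambda>k. a k (f k))))"
    by (rule det_linear_rows_sum) (use ac in auto)
  finally have one: "1 = (\<Sum>f\<in>{f. (\<forall>i\<in>{0..<r}. f i \<in> {0..<m}) \<and> (\<forall>i. i \<notin> {0..<r} \<longrightarrow> f i = i)}.
        det (mat\<^sub>r r r (\<lambda>k. a k (f k))))" .
  have "d dvd det (mat\<^sub>r r r (\<lambda>k. a k (f k)))"
    if f: "f \<in> {f. (\<forall>i\<in>{0..<r}. f i \<in> {0..<m}) \<and> (\<forall>i. i \<notin> {0..<r} \<longrightarrow> f i = i)}" for f
  proof -
    have "det (mat\<^sub>r r r (\<lambda>k. a k (f k))) = prod (\<lambda>k. \<beta> (f k) k) {0..<r} * det (mat\<^sub>r r r (\<lambda>k. col Y (f k)))"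
      unfolding a_def by (rule det_rows_mul) (use Y in auto)
    moreover have "d dvd det (mat\<^sub>r r r (\<lambda>k. col Y (f k)))"
      by (rule minor_dvd_cols[OF Y d]) (use f in auto)
    ultimately show ?thesis by simp
  qed
  then have "d dvd (\<Sum>f\<in>{f. (\<forall>i\<in>{0..<r}. f i \<in> {0..<m}) \<and> (\<forall>i. i \<notin> {0..<r} \<longrightarrow> f i = i)}.
        det (mat\<^sub>r r r (\<lambda>k. a k (f k))))" by (rule dvd_sum)
  then show ?thesis using one by simp
qed


lemma bezout_poly:
  fixes f :: "'b \<Rightarrow> 'a::field poly"
  assumes K: "finite K" and cop: "\<forall>d. (\<forall>k\<in>K. d dvd f k) \<longrightarrow> is_unit d"
  shows "\<exists>u. (\<Sum>k\<in>K. u k * f k) = 1"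
proof -
  define Id where "Id = {x. \<exists>u. x = (\<Sum>k\<in>K. u k * f k)}"
  have fin: "f k \<in> Id" if "k \<in> K" for k
  proof -
    have "(\<Sum>j\<in>K. (if j = k then 1 else 0) * f j) = (\<Sum>j\<in>K. if j = k then f j else 0)"
      by (rule sum.cong) auto
    also have "\<dots> = f k" using K that by simp
    finally have e: "f k = (\<Sum>j\<in>K. (if j = k then 1 else 0) * f j)" by simp
    show ?thesis unfolding Id_def mem_Collect_eq by (rule exI[of _ "\<lambda>j. if j = k then 1 else 0"]) (rule e)
  qed
  have lin: "x - c * y \<in> Id" if xI: "x \<in> Id" and yI: "y \<in> Id" for x y c
  proof -
    obtain u where u: "x = (\<Sum>k\<in>K. u k * f k)" using xI unfolding Id_def by blast
    obtain v where v: "y = (\<Sum>k\<in>K. v k * f k)" using yI unfolding Id_def by blast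
    from u v have "x - c * y = (\<Sum>k\<in>K. (u k - c * v k) * f k)"
      by (simp add: sum_subtractf sum_distrib_left left_diff_distrib mult.assoc)
    then show ?thesis unfolding Id_def mem_Collect_eq by (intro exI[of _ "\<lambda>k. u k - c * v k"]) simp
  qed
  have "\<exists>k\<in>K. f k \<noteq> 0"
  proof (rule ccontr)
    assume "\<not> (\<exists>k\<in>K. f k \<noteq> 0)"
    then have "\<forall>k\<in>K. 0 dvd f k" by simp
    then have "is_unit (0::'a poly)" using cop by blast
    then show False by simp
  qed
  then obtain k0 where "k0 \<in> K" "f k0 \<noteq> 0" by blast
  then have ex: "\<exists>m. \<exists>x\<in>Id. x \<noteq> 0 \<and> degree x = m" using fin by blast
  define D where "D = (LEAST m. \<exists>x\<in>Id. x \<noteq> 0 \<and> degree x = m)"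
  obtain p where p: "p \<in> Id" "p \<noteq> 0" "degree p = D"
    using LeastI_ex[OF ex] unfolding D_def by blast
  have minD: "D \<le> degree x" if "x \<in> Id" "x \<noteq> 0" for x
    unfolding D_def by (rule Least_le) (use that in blast)
  have "p dvd f k" if k: "k \<in> K" for k
  proof -
    have "f k mod p = f k - (f k div p) * p" by (simp add: mod_div_mult_eq[symmetric] algebra_simps)
    then have mI: "f k mod p \<in> Id" using lin[OF fin[OF k] p(1)] by simp
    have "f k mod p = 0"
    proof (rule ccontr)
      assume nz: "f k mod p \<noteq> 0"
      then have "degree (f k mod p) < degree p" using degree_mod_less[OF p(2)] by blast
      then show False using minD[OF mI nz] p(3) by simp
    qed
    then show ?thesis by (simp add: mod_eq_0_iff_dvd)
  qed
  then have "is_unit p" using cop by blast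
  then obtain w where w: "1 = p * w" by (auto elim: dvdE)
  obtain u where u: "p = (\<Sum>k\<in>K. u k * f k)" using p(1) unfolding Id_def by auto
  have "(\<Sum>k\<in>K. (w * u k) * f k) = w * p" unfolding u by (simp add: sum_distrib_left mult.assoc)
  also have "\<dots> = 1" using w by (simp add: mult.commute)
  finally show ?thesis by (intro exI[of _ "\<lambda>k. w * u k"])
qed


lemma submatrix_rows:
  assumes Y: "Y \<in> carrier_mat nr m" and I: "I \<subseteq> {..<nr}"
  shows "submatrix Y I UNIV \<in> carrier_mat (card I) m"
    "\<And>l t. l < card I \<Longrightarrow> t < m \<Longrightarrow> submatrix Y I UNIV $$ (l,t) = Y $$ (pick I l, t)"
proof -
  have c1: "card {i. i < dim_row Y \<and> i \<in> I} = card I"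
  proof -
    have "{i. i < dim_row Y \<and> i \<in> I} = I" using Y I by auto
    then show ?thesis by simp
  qed
  have c2: "card {j. j < dim_col Y \<and> j \<in> UNIV} = m" using Y by simp
  show "submatrix Y I UNIV \<in> carrier_mat (card I) m"
    unfolding carrier_mat_def using dim_submatrix[of Y I UNIV] c1 c2 by simp
  fix l t assume "l < card I" "t < m"
  then show "submatrix Y I UNIV $$ (l,t) = Y $$ (pick I l, t)"
    using submatrix_index[of l Y I t UNIV] c1 c2 pick_UNIV by simp
qed

lemma det_scale_rel:
  fixes A B :: "'b::comm_ring_1 mat"
  assumes A: "A \<in> carrier_mat r r" and B: "B \<in> carrier_mat r r"
    and rel: "\<And>k l. k < r \<Longrightarrow> l < r \<Longrightarrow> c k * A $$ (k,l) = B $$ (k,l) * e l"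
  shows "prod c {0..<r} * det A = prod e {0..<r} * det B"
proof -
  define C where "C = mat r r (\<lambda>(k,l). c k * A $$ (k,l))"
  have "C = mat\<^sub>r r r (\<lambda>k. c k \<cdot>\<^sub>v row A k)"
    unfolding C_def using A by (intro eq_matI) auto
  then have "det C = prod c {0..<r} * det (mat\<^sub>r r r (\<lambda>k. row A k))"
    using det_rows_mul[of "\<lambda>k. row A k" r c] A by auto
  also have "mat\<^sub>r r r (\<lambda>k. row A k) = A" using A by (intro eq_matI) auto
  finally have dC: "det C = prod c {0..<r} * det A" .
  have "transpose_mat C = mat\<^sub>r r r (\<lambda>l. e l \<cdot>\<^sub>v col B l)"
    unfolding C_def using A B rel by (intro eq_matI) (auto simp: mult.commute)
  then have "det (transpose_mat C) = prod e {0..<r} * det (mat\<^sub>r r r (\<lambda>l. col B l))"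
    using det_rows_mul[of "\<lambda>l. col B l" r e] B by auto
  also have "mat\<^sub>r r r (\<lambda>l. col B l) = transpose_mat B" using B by (intro eq_matI) auto
  also have "det (transpose_mat B) = det B" by (rule det_transpose[OF B])
  finally have "det (transpose_mat C) = prod e {0..<r} * det B" .
  moreover have "det (transpose_mat C) = det C" unfolding C_def by (rule det_transpose[of _ r]) simp
  ultimately show ?thesis using dC by simp
qed

lemma prod_monom1: "(\<Prod>k\<in>K. monom (1::'a::comm_semiring_1) (f k)) = monom 1 (\<Sum>k\<in>K. f k)"
  by (induction K rule: infinite_finite_induct) (auto simp: mult_monom)

lemma pcompose_hom:
  assumes "n > 0"
  shows "comm_ring_hom (\<lambda>p::'a::comm_ring_1 poly. pcompose p (monom 1 n))"
  by unfold_locales (auto simp: pcompose_add pcompose_mult pcompose_1)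

lemma eval0_hom: "comm_ring_hom (\<lambda>p::'a::comm_ring_1 poly. poly p 0)"
  by unfold_locales auto




lemma coeff_pcompose_monom_n:
  fixes p :: "'a::comm_ring_1 poly"
  assumes n: "n > 0"
  shows "coeff (pcompose p (monom 1 n)) m = (if n dvd m then coeff p (m div n) else 0)"
proof (induction p arbitrary: m)
  case 0
  then show ?case by simp
next
  case (pCons a p)
  have "coeff (pcompose (pCons a p) (monom 1 n)) m = coeff ([:a:] + monom 1 n * pcompose p (monom 1 n)) m"
    by (simp add: pcompose_pCons)
  also have "\<dots> = (if m = 0 then a else 0) + (if n \<le> m then coeff (pcompose p (monom 1 n)) (m - n) else 0)"
    by (simp add: coeff_monom_mult coeff_pCons split: nat.splits)
  also have "\<dots> = (if n dvd m then coeff (pCons a p) (m div n) else 0)"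
  proof (cases "m = 0")
    case True then show ?thesis using n by simp
  next
    case m0: False
    show ?thesis
    proof (cases "n \<le> m")
      case False
      then have "\<not> n dvd m" using m0 by (meson dvd_imp_le not_le not_gr0)
      then show ?thesis using False m0 by simp
    next
      case True
      have dv: "n dvd m \<longleftrightarrow> n dvd (m - n)" using True by (simp add: dvd_minus_self)
      have dm: "m div n = Suc ((m - n) div n)" using True n by (simp add: div_if)
      show ?thesis using True m0 by (simp add: pCons.IH dv dm)
    qed
  qed
  finally show ?case .
qed

lemma coeff_xi_entry:
  assumes n: "n > 0"
  shows "coeff (xi_entry n g a b) l =
    (if b \<ge> a then coeff (g b) (n*l + (b - a))
     else if l = 0 then 0 else coeff (g b) (n*(l-1) + (n + b - a)))"
proof (cases "b \<ge> a")
  case True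
  have "coeff (xi_entry n g a b) l = (\<Sum>k\<le>degree (g b). if k = l then coeff (g b) (n*k + (b - a)) else 0)"
    unfolding xi_entry_def using True by (simp add: coeff_sum coeff_monom)
  also have "\<dots> = coeff (g b) (n*l + (b - a))"
  proof (cases "l \<le> degree (g b)")
    case False
    then have "degree (g b) < n*l + (b - a)"
    proof -
      have "n*l \<ge> l" using n by simp
      then show ?thesis using False by linarith
    qed
    then show ?thesis using False by (simp add: coeff_eq_0)
  qed simp
  finally show ?thesis using True by simp
next
  case False
  have "coeff (xi_entry n g a b) l = (\<Sum>k\<le>degree (g b). if Suc k = l then coeff (g b) (n*k + (n + b - a)) else 0)"
    unfolding xi_entry_def using False by (simp add: coeff_sum coeff_monom)
  also have "\<dots> = (if l = 0 then 0 else coeff (g b) (n*(l-1) + (n + b - a)))"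
  proof (cases l)
    case 0 then show ?thesis by simp
  next
    case (Suc k)
    show ?thesis
    proof (cases "k \<le> degree (g b)")
      case True
      have "(\<Sum>j\<le>degree (g b). if Suc j = l then coeff (g b) (n*j + (n + b - a)) else 0)
          = (\<Sum>j\<le>degree (g b). if j = k then coeff (g b) (n*j + (n + b - a)) else 0)"
        using Suc by (intro sum.cong) auto
      then show ?thesis using True Suc by simp
    next
      case F: False
      have "degree (g b) < n*k + (n + b - a)"
      proof -
        have "n*k \<ge> k" using n by simp
        then show ?thesis using F by linarith
      qed
      then show ?thesis using F Suc by (simp add: coeff_eq_0)
    qed
  qed
  finally show ?thesis using False by simp
qed


context sk
begin

lemma shift_mod:
  assumes a: "a < n" and b: "b < n" and am: "a \<le> m"
  shows "shiftpos n (m - a) b = a \<longleftrightarrow> m mod n = b"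
proof -
  have "shiftpos n (m - a) b = a \<longleftrightarrow> int (shiftpos n (m - a) b) = int a" by simp
  also have "\<dots> \<longleftrightarrow> (int b - (int m - int a)) mod int n = int a mod int n"
    using a am by (simp add: shiftpos_int[OF npos] of_nat_diff)
  also have "\<dots> \<longleftrightarrow> int n dvd (int b - (int m - int a) - int a)" by (rule mod_eq_dvd_iff)
  also have "\<dots> \<longleftrightarrow> int n dvd (int m - int b)"
  proof -
    have "int b - (int m - int a) - int a = - (int m - int b)" by simp
    then show ?thesis by (simp only: dvd_minus_iff)
  qed
  also have "\<dots> \<longleftrightarrow> int m mod int n = int b mod int n" by (rule mod_eq_dvd_iff[symmetric])
  also have "\<dots> \<longleftrightarrow> m mod n = b" using b by (simp add: zmod_int[symmetric])
  finally show ?thesis .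
qed

lemma entry_rel:
  assumes a: "a < n" and b: "b < n"
  shows "monom 1 a * q a b = pcompose (xi_entry n g a b) (monom 1 n) * monom 1 b"
proof (rule poly_eqI)
  fix m
  have L: "coeff (monom 1 a * q a b) m = (if a \<le> m \<and> m mod n = b then coeff (g b) (m - a) else 0)"
    using shift_mod[OF a b] b by (auto simp: coeff_monom_mult coeff_comp)
  have R: "coeff (pcompose (xi_entry n g a b) (monom 1 n) * monom 1 b) m
      = (if b \<le> m \<and> n dvd (m - b) then coeff (xi_entry n g a b) ((m - b) div n) else 0)"
    by (simp add: mult.commute[of _ "monom 1 b"] coeff_monom_mult coeff_pcompose_monom_n[OF npos])
  show "coeff (monom 1 a * q a b) m = coeff (pcompose (xi_entry n g a b) (monom 1 n) * monom 1 b) m"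
  proof (cases "m mod n = b")
    case False
    have "\<not> (b \<le> m \<and> n dvd (m - b))"
    proof
      assume "b \<le> m \<and> n dvd (m - b)"
      then have "m mod n = b mod n" using mod_eq_dvd_iff_nat by blast
      then show False using False b by simp
    qed
    then show ?thesis unfolding L R using False by auto
  next
    case True
    note mb = True
    define k where "k = m div n"
    have mk: "m = n * k + b" unfolding k_def using True div_mult_mod_eq[of m n] by (simp add: mult.commute)
    have bm: "b \<le> m \<and> n dvd (m - b)" using mk by simp
    have kd: "(m - b) div n = k" using mk npos by simp
    show ?thesis
    proof (cases "a \<le> b")
      case True
      then show ?thesis unfolding L R using bm kd mk b
        by (simp add: coeff_xi_entry[OF npos])
    next
      case nab: False
      show ?thesis
      proof (cases k)
        case 0
        then show ?thesis unfolding L R using bm kd mk nab b by (simp add: coeff_xi_entry[OF npos])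
      next
        case (Suc k')
        have am: "a \<le> m" using mk Suc a by (simp add: algebra_simps)
        have ma: "m - a = n * k' + (n + b - a)" using mk Suc a by (simp add: algebra_simps)
        have c1: "(m - b) div n = Suc k'" using kd Suc by simp
        have cx: "coeff (xi_entry n g a b) (Suc k') = coeff (g b) (n*k' + (n + b - a))"
          using nab by (simp add: coeff_xi_entry[OF npos])
        show ?thesis unfolding L R using bm am mb c1 cx ma by simp
      qed
    qed
  qed
qed


lemma X_entry: "a < n \<Longrightarrow> b < n \<Longrightarrow> xi n g $$ (a,b) = xi_entry n g a b"
  unfolding xi_def by simp

lemma X_dims: "xi n g \<in> carrier_mat n n" unfolding xi_def by simp

lemma X_zero_iff:
  assumes a: "a < n" and b: "b < n"
  shows "xi_entry n g a b = 0 \<longleftrightarrow> q a b = 0"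
proof
  assume "xi_entry n g a b = 0"
  then have "monom 1 a * q a b = 0" using entry_rel[OF a b] by simp
  then show "q a b = 0" by (simp add: monom_eq_0_iff)
next
  assume "q a b = 0"
  then have "pcompose (xi_entry n g a b) (monom 1 n) * monom 1 b = 0" using entry_rel[OF a b] by simp
  then have "pcompose (xi_entry n g a b) (monom 1 n) = 0" by (simp add: monom_eq_0_iff)
  moreover have "degree (monom (1::'a) n) > 0" using npos by (simp add: degree_monom_eq)
  ultimately show "xi_entry n g a b = 0" using pcompose_eq_0 by blast
qed

lemma nonzero_rows_X: "nonzero_rows (xi n g) = S"
proof -
  have Sc: "a \<in> S \<longleftrightarrow> a < n \<and> (\<exists>b<n. q a b \<noteq> 0)" for a
  proof
    assume aS: "a \<in> S"
    then have "a < n" "q a \<noteq> (\<lambda>j. 0)" unfolding supp_def skzero_def by auto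
    then obtain j where "q a j \<noteq> 0" by (auto simp: fun_eq_iff)
    moreover then have "j < n" using comp_ge[of n j g a] by (cases "j < n") auto
    ultimately show "a < n \<and> (\<exists>b<n. q a b \<noteq> 0)" using \<open>a < n\<close> by blast
  next
    assume "a < n \<and> (\<exists>b<n. q a b \<noteq> 0)"
    then show "a \<in> S" unfolding supp_def skzero_def by (auto simp: fun_eq_iff)
  qed
  have dr: "dim_row (xi n g) = n" "dim_col (xi n g) = n" using X_dims by auto
  have "a \<in> nonzero_rows (xi n g) \<longleftrightarrow> a \<in> S" for a
  proof -
    have "a \<in> nonzero_rows (xi n g) \<longleftrightarrow> a < n \<and> (\<exists>b<n. xi n g $$ (a,b) \<noteq> 0)"
      unfolding nonzero_rows_def dr by simp
    also have "\<dots> \<longleftrightarrow> a < n \<and> (\<exists>b<n. q a b \<noteq> 0)"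
      using X_entry X_zero_iff by auto
    also have "\<dots> \<longleftrightarrow> a \<in> S" using Sc by blast
    finally show "a \<in> nonzero_rows (xi n g) \<longleftrightarrow> a \<in> S" .
  qed
  then show ?thesis by blast
qed

lemma in_M_X: "in_M n (xi n g)"
  unfolding in_M_def
proof (intro conjI allI impI)
  show "xi n g \<in> carrier_mat n n" by (rule X_dims)
  fix a b assume "a < n" "b < n" "b < a"
  then show "poly (xi n g $$ (a, b)) 0 = 0"
    by (simp add: X_entry poly_0_coeff_0 coeff_xi_entry[OF npos])
qed

lemma delay_free_diag:
  assumes df: "delay_free n g" and aS: "a \<in> S"
  shows "poly (xi n g $$ (a, a)) 0 \<noteq> 0"
proof -
  have an: "a < n" using aS S_sub by auto
  have "a \<in> supp n (const_term n g)" using df aS unfolding delay_free_def by simp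
  then have "comp n (const_term n g) a \<noteq> (\<lambda>j. 0)" unfolding supp_def skzero_def by simp
  then obtain j where "comp n (const_term n g) a j \<noteq> 0" by (auto simp: fun_eq_iff)
  then have "coeff (comp n (const_term n g) a j) (degree (comp n (const_term n g) a j)) \<noteq> 0" by simp
  then obtain l where "coeff (comp n (const_term n g) a j) l \<noteq> 0" by blast
  then have j: "j < n" "shiftpos n l j = a" "coeff (const_term n g j) l \<noteq> 0"
    by (auto simp: coeff_comp split: if_splits)
  then have l0: "l = 0" and c0: "coeff (g j) 0 \<noteq> 0"
    unfolding const_term_def by (auto simp: coeff_pCons split: nat.splits)
  have "shiftpos n 0 j = j" unfolding shiftpos_def using j(1) by simp
  then have "j = a" using j(2) l0 by simp
  then show ?thesis using c0 an by (simp add: X_entry poly_0_coeff_0 coeff_xi_entry[OF npos])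
qed

lemma delay_free_mat_X: "delay_free n g \<Longrightarrow> delay_free_mat (xi n g)"
  unfolding delay_free_mat_def nonzero_rows_X using delay_free_diag by blast

end


lemma dvd_monom_cancel1:
  fixes D y :: "'a::field poly"
  assumes d: "D dvd [:0,1:] * y" and p0: "poly D 0 \<noteq> 0"
  shows "D dvd y"
proof -
  obtain k where k: "[:0,1:] * y = D * k" using d by (auto elim: dvdE)
  have "poly ([:0,1:] * y) 0 = 0" by simp
  then have "poly D 0 * poly k 0 = 0" unfolding k by simp
  then have "poly k 0 = 0" using p0 by simp
  then have "[:0,1:] dvd k" using dvd_iff_poly_eq_0[of 0 k] by simp
  then obtain k' where k': "k = [:0,1:] * k'" by (auto elim: dvdE)
  have "[:0,1:] * y = [:0,1:] * (D * k')" using k k' by (simp add: mult_ac)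
  moreover have "[:0,1::'a:] \<noteq> 0" by simp
  ultimately have "y = D * k'" using mult_left_cancel by blast
  then show ?thesis by simp
qed

lemma dvd_monom_cancel:
  fixes D y :: "'a::field poly"
  assumes d: "D dvd monom 1 e * y" and p0: "poly D 0 \<noteq> 0"
  shows "D dvd y"
  using d
proof (induction e arbitrary: y)
  case 0
  then show ?case by simp
next
  case (Suc e)
  have "monom (1::'a) (Suc e) * y = [:0,1:] * (monom 1 e * y)"
    by (simp add: monom_Suc)
  then have "D dvd monom 1 e * y" using Suc.prems dvd_monom_cancel1[OF _ p0] by metis
  then show ?case by (rule Suc.IH)
qed

context sk
begin

abbreviation r :: nat where "r \<equiv> card S"

definition Qm :: "'a poly mat" where "Qm = mat n n (\<lambda>(a,b). q a b)"

abbreviation "Qs \<equiv> submatrix Qm S UNIV"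
abbreviation "Xs \<equiv> submatrix (xi n g) S UNIV"

lemma Qs_carrier: "Qs \<in> carrier_mat r n"
  using submatrix_rows(1)[of Qm n n S] S_sub unfolding Qm_def by auto

lemma Qs_entry: "l < r \<Longrightarrow> i < n \<Longrightarrow> Qs $$ (l,i) = q (pick S l) i"
proof -
  assume l: "l < r" and i: "i < n"
  have p: "pick S l < n" using pick_in_set_le[OF l] S_sub by auto
  show ?thesis using submatrix_rows(2)[of Qm n n S l i] S_sub l i p unfolding Qm_def by auto
qed

lemma Xs_carrier: "Xs \<in> carrier_mat r n"
  using submatrix_rows(1)[OF X_dims, of S] S_sub by auto

lemma Xs_entry: "l < r \<Longrightarrow> i < n \<Longrightarrow> Xs $$ (l,i) = xi_entry n g (pick S l) i"
proof -
  assume l: "l < r" and i: "i < n"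
  have p: "pick S l < n" using pick_in_set_le[OF l] S_sub by auto
  show ?thesis using submatrix_rows(2)[OF X_dims, of S l i] S_sub l i p X_entry by auto
qed

lemma pick_S: "l < r \<Longrightarrow> pick S l \<in> S \<and> pick S l < n"
  using pick_in_set_le[of l S] S_sub by auto

lemma RI_iff: "RI \<longleftrightarrow> (\<exists>\<beta>. \<forall>l<r. \<forall>k<r. (\<Sum>i<n. Qs $$ (l,i) * \<beta> i k) = (if l = k then 1 else 0))"
proof
  assume RI
  then obtain \<beta> where beta: "\<forall>a\<in>S. \<forall>a'\<in>S. (\<Sum>i<n. q a i * \<beta> i a') = (if a = a' then 1 else 0)"
    unfolding RI_def by blast
  have "(\<Sum>i<n. Qs $$ (l,i) * \<beta> i (pick S k)) = (if l = k then 1 else 0)" if l: "l < r" and k: "k < r" for l k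
  proof -
    have "(\<Sum>i<n. Qs $$ (l,i) * \<beta> i (pick S k)) = (\<Sum>i<n. q (pick S l) i * \<beta> i (pick S k))"
      using Qs_entry l by simp
    also have "\<dots> = (if pick S l = pick S k then 1 else 0)" using beta pick_S l k by simp
    also have "(pick S l = pick S k) = (l = k)"
    proof
      assume "pick S l = pick S k"
      then show "l = k" using pick_mono_le[OF l, of k] pick_mono_le[OF k, of l] by (cases "l < k"; cases "k < l") auto
    qed simp
    finally show ?thesis .
  qed
  then show "\<exists>\<beta>. \<forall>l<r. \<forall>k<r. (\<Sum>i<n. Qs $$ (l,i) * \<beta> i k) = (if l = k then 1 else 0)"
    by (intro exI[of _ "\<lambda>i k. \<beta> i (pick S k)"]) blast
next
  assume "\<exists>\<beta>. \<forall>l<r. \<forall>k<r. (\<Sum>i<n. Qs $$ (l,i) * \<beta> i k) = (if l = k then 1 else 0)"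
  then obtain \<beta> where beta: "\<forall>l<r. \<forall>k<r. (\<Sum>i<n. Qs $$ (l,i) * \<beta> i k) = (if l = k then 1 else 0)" by blast
  define idx where "idx a = card {x\<in>S. x < a}" for a
  have idx: "a \<in> S \<Longrightarrow> idx a < r \<and> pick S (idx a) = a" for a
    unfolding idx_def using idx_lt[OF S_fin] pick_card_in_set by auto
  have "(\<Sum>i<n. q a i * \<beta> i (idx a')) = (if a = a' then 1 else 0)" if a: "a \<in> S" and a': "a' \<in> S" for a a'
  proof -
    have "(\<Sum>i<n. q a i * \<beta> i (idx a')) = (\<Sum>i<n. Qs $$ (idx a, i) * \<beta> i (idx a'))"
      using Qs_entry idx[OF a] by simp
    also have "\<dots> = (if idx a = idx a' then 1 else 0)" using beta idx a a' by simp
    also have "(idx a = idx a') = (a = a')" using idx[OF a] idx[OF a'] by metis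
    finally show ?thesis .
  qed
  then show RI unfolding RI_def by (intro exI[of _ "\<lambda>i a. \<beta> i (idx a)"]) blast
qed

definition CQ :: bool where
  "CQ \<longleftrightarrow> (\<forall>d. (\<forall>J. J \<subseteq> {..<n} \<and> card J = r \<longrightarrow> d dvd det (submatrix Qs UNIV J)) \<longrightarrow> is_unit d)"

lemma RI_iff_CQ: "RI \<longleftrightarrow> CQ"
proof
  assume RI
  then obtain \<beta> where beta: "\<forall>l<r. \<forall>k<r. (\<Sum>i<n. Qs $$ (l,i) * \<beta> i k) = (if l = k then 1 else 0)"
    using RI_iff by blast
  show CQ unfolding CQ_def using right_inverse_minors_dvd[OF Qs_carrier beta] by blast
next
  assume cq: CQ
  define Js where "Js = {J. J \<subseteq> {..<n} \<and> card J = r}"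
  have Jsf: "finite Js" unfolding Js_def by (rule finite_subset[of _ "Pow {..<n}"]) auto
  obtain u where u: "(\<Sum>J\<in>Js. u J * det (submatrix Qs UNIV J)) = 1"
    using bezout_poly[OF Jsf, of "\<lambda>J. det (submatrix Qs UNIV J)"] cq unfolding CQ_def Js_def by blast
  show RI using adj_right_inverse[OF Qs_carrier, of u] u RI_iff unfolding Js_def by blast
qed


lemma subQ:
  assumes J: "J \<subseteq> {..<n}" "card J = r"
  shows "submatrix Qs UNIV J \<in> carrier_mat r r"
    "\<And>k l. k < r \<Longrightarrow> l < r \<Longrightarrow> submatrix Qs UNIV J $$ (k,l) = q (pick S k) (pick J l)"
proof -
  show "submatrix Qs UNIV J \<in> carrier_mat r r" using submatrix_cols(1)[OF Qs_carrier J(1)] J(2) by simp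
  fix k l assume k: "k < r" and l: "l < r"
  have pj: "pick J l < n" using pick_in_set_le[of l J] J l by auto
  show "submatrix Qs UNIV J $$ (k,l) = q (pick S k) (pick J l)"
    using submatrix_cols(2)[OF Qs_carrier J(1) k] l J(2) Qs_entry[OF k pj] by simp
qed

lemma subX:
  assumes J: "J \<subseteq> {..<n}" "card J = r"
  shows "submatrix Xs UNIV J \<in> carrier_mat r r"
    "\<And>k l. k < r \<Longrightarrow> l < r \<Longrightarrow> submatrix Xs UNIV J $$ (k,l) = xi_entry n g (pick S k) (pick J l)"
proof -
  show "submatrix Xs UNIV J \<in> carrier_mat r r" using submatrix_cols(1)[OF Xs_carrier J(1)] J(2) by simp
  fix k l assume k: "k < r" and l: "l < r"
  have pj: "pick J l < n" using pick_in_set_le[of l J] J l by auto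
  show "submatrix Xs UNIV J $$ (k,l) = xi_entry n g (pick S k) (pick J l)"
    using submatrix_cols(2)[OF Xs_carrier J(1) k] l J(2) Xs_entry[OF k pj] by simp
qed

lemma minor_rel:
  assumes J: "J \<subseteq> {..<n}" "card J = r"
  shows "monom 1 (\<Sum>k\<in>{0..<r}. pick S k) * det (submatrix Qs UNIV J)
       = monom 1 (\<Sum>k\<in>{0..<r}. pick J k) * pcompose (det (submatrix Xs UNIV J)) (monom 1 n)"
proof -
  interpret pc: comm_ring_hom "\<lambda>p::'a poly. pcompose p (monom 1 n)" by (rule pcompose_hom[OF npos])
  let ?A = "submatrix Qs UNIV J"
  let ?B = "map_mat (\<lambda>p. pcompose p (monom 1 n)) (submatrix Xs UNIV J)"
  have A: "?A \<in> carrier_mat r r" by (rule subQ(1)[OF J])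
  have B: "?B \<in> carrier_mat r r" using subX(1)[OF J] by (simp add: map_carrier_mat)
  have rel: "monom 1 (pick S k) * ?A $$ (k,l) = ?B $$ (k,l) * monom 1 (pick J l)" if k: "k < r" and l: "l < r" for k l
  proof -
    have pj: "pick J l < n" using pick_in_set_le[of l J] J l by auto
    have ps: "pick S k < n" using pick_S[OF k] by auto
    show ?thesis using subQ(2)[OF J k l] subX(2)[OF J k l] subX(1)[OF J] entry_rel[OF ps pj] k l by simp
  qed
  have "prod (\<lambda>k. monom 1 (pick S k)) {0..<r} * det ?A = prod (\<lambda>l. monom 1 (pick J l)) {0..<r} * det ?B"
    by (rule det_scale_rel[OF A B rel])
  then show ?thesis by (simp add: prod_monom1)
qed

lemma hS0:
  assumes df: "delay_free n g"
  shows "poly (det (submatrix Xs UNIV S)) 0 \<noteq> 0"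
proof -
  interpret ev: comm_ring_hom "\<lambda>p::'a poly. poly p 0" by (rule eval0_hom)
  have J: "S \<subseteq> {..<n}" "card S = r" using S_sub by auto
  let ?M = "submatrix Xs UNIV S"
  let ?Z = "map_mat (\<lambda>p. poly p 0) ?M"
  have M: "?M \<in> carrier_mat r r" by (rule subX(1)[OF J])
  have M0: "?Z \<in> carrier_mat r r" using M by (simp add: map_carrier_mat)
  have ut: "upper_triangular ?Z"
    unfolding upper_triangular_def
  proof (intro allI impI)
    fix i j assume i: "i < dim_row ?Z" and ji: "j < i"
    then have ir: "i < r" and jr: "j < r" using M by auto
    have lt: "pick S j < pick S i" using pick_mono_le[OF ir ji] .
    have "?Z $$ (i,j) = poly (xi_entry n g (pick S i) (pick S j)) 0"
      using subX(2)[OF J ir jr] M ir jr by simp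
    also have "\<dots> = 0" using in_M_X lt pick_S[OF ir] pick_S[OF jr] X_entry
      unfolding in_M_def by metis
    finally show "?Z $$ (i,j) = 0" .
  qed
  have "det ?Z = prod_list (diag_mat ?Z)" by (rule det_upper_triangular[OF ut M0])
  also have "\<dots> \<noteq> 0"
  proof -
    have "0 \<notin> set (diag_mat ?Z)"
    proof
      assume "0 \<in> set (diag_mat ?Z)"
      then obtain i where i: "i < r" "?Z $$ (i,i) = 0" unfolding diag_mat_def using M0 by auto
      have "?Z $$ (i,i) = poly (xi n g $$ (pick S i, pick S i)) 0"
        using subX(2)[OF J i(1) i(1)] M i(1) pick_S[OF i(1)] X_entry by simp
      then show False using i(2) delay_free_diag[OF df] pick_S[OF i(1)] by simp
    qed
    then show ?thesis by (simp add: prod_list_zero_iff)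
  qed
  finally show ?thesis using ev.hom_det[of ?M] by simp
qed


lemma CQ_iff_basic:
  assumes df: "delay_free n g"
  shows "CQ \<longleftrightarrow> basic Xs"
proof -
  interpret pc: comm_ring_hom "\<lambda>p::'a poly. pcompose p (monom 1 n)" by (rule pcompose_hom[OF npos])
  define Js where "Js = {J. J \<subseteq> {..<n} \<and> card J = r}"
  have Jsf: "finite Js" unfolding Js_def by (rule finite_subset[of _ "Pow {..<n}"]) auto
  have SJ: "S \<in> Js" unfolding Js_def using S_sub by auto
  define hX where "hX J = det (submatrix Xs UNIV J)" for J
  define hQ where "hQ J = det (submatrix Qs UNIV J)" for J
  define eS where "eS = (\<Sum>k\<in>{0..<r}. pick S k)"
  define eJ where "eJ J = (\<Sum>k\<in>{0..<r}. pick J k)" for J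
  have rel: "J \<in> Js \<Longrightarrow> monom 1 eS * hQ J = monom 1 (eJ J) * pcompose (hX J) (monom 1 n)" for J
    unfolding Js_def eS_def eJ_def hQ_def hX_def using minor_rel by blast
  have hSS: "hQ S = pcompose (hX S) (monom 1 n)"
  proof -
    have "monom 1 eS * hQ S = monom 1 eS * pcompose (hX S) (monom 1 n)"
      using rel[OF SJ] unfolding eJ_def eS_def by simp
    moreover have "monom (1::'a) eS \<noteq> 0" by simp
    ultimately show ?thesis using mult_left_cancel by blast
  qed
  have h0: "poly (hX S) 0 \<noteq> 0" unfolding hX_def by (rule hS0[OF df])
  have pc0: "poly (pcompose p (monom 1 n)) 0 = poly p 0" for p :: "'a poly"
    using npos by (simp add: poly_pcompose poly_monom zero_power)
  have dimsX: "dim_col Xs = n" "dim_row Xs = r" using Xs_carrier by auto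
  have basic_iff: "basic Xs \<longleftrightarrow> (\<forall>d. (\<forall>J\<in>Js. d dvd hX J) \<longrightarrow> is_unit d)"
    unfolding basic_def dimsX Js_def hX_def by blast
  have CQ_iff: "CQ \<longleftrightarrow> (\<forall>d. (\<forall>J\<in>Js. d dvd hQ J) \<longrightarrow> is_unit d)"
    unfolding CQ_def Js_def hQ_def by blast
  show ?thesis
  proof
    assume cq: CQ
    show "basic Xs" unfolding basic_iff
    proof (intro allI impI)
      fix d :: "'a poly" assume dv: "\<forall>J\<in>Js. d dvd hX J"
      have dS: "d dvd hX S" using dv SJ by blast
      then obtain k where k: "hX S = d * k" by (auto elim: dvdE)
      have dp0: "poly d 0 \<noteq> 0" using h0 unfolding k by simp
      then have d0: "d \<noteq> 0" by auto
      let ?D = "pcompose d (monom 1 n)"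
      have Dp0: "poly ?D 0 \<noteq> 0" using dp0 pc0 by simp
      have "?D dvd hQ J" if J: "J \<in> Js" for J
      proof -
        have "?D dvd pcompose (hX J) (monom 1 n)" using dv J pc.hom_dvd by blast
        then have "?D dvd monom 1 (eJ J) * pcompose (hX J) (monom 1 n)" by simp
        then have "?D dvd monom 1 eS * hQ J" using rel[OF J] by simp
        then show ?thesis using dvd_monom_cancel Dp0 by blast
      qed
      then have "is_unit ?D" using cq unfolding CQ_iff by blast
      moreover have "?D \<noteq> 0" using Dp0 by auto
      ultimately have "degree ?D = 0" by (simp add: is_unit_iff_degree)
      then have "degree d = 0" using npos by (simp add: degree_pcompose degree_monom_eq)
      then show "is_unit d" using d0 by (simp add: is_unit_iff_degree)
    qed
  next
    assume bs: "basic Xs"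
    show CQ unfolding CQ_iff
    proof (intro allI impI)
      fix d :: "'a poly" assume dv: "\<forall>J\<in>Js. d dvd hQ J"
      have "d dvd hQ S" using dv SJ by blast
      then have dS: "d dvd pcompose (hX S) (monom 1 n)" using hSS by simp
      then obtain k where k: "pcompose (hX S) (monom 1 n) = d * k" by (auto elim: dvdE)
      have dp0: "poly d 0 \<noteq> 0" using h0 pc0[of "hX S"] unfolding k by (metis mult_zero_left poly_mult)
      have dJ: "d dvd pcompose (hX J) (monom 1 n)" if J: "J \<in> Js" for J
      proof -
        have "d dvd monom 1 eS * hQ J" using dv J by simp
        then have "d dvd monom 1 (eJ J) * pcompose (hX J) (monom 1 n)" using rel[OF J] by simp
        then show ?thesis using dvd_monom_cancel dp0 by blast
      qed
      obtain u where u: "(\<Sum>J\<in>Js. u J * hX J) = 1"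
        using bezout_poly[OF Jsf, of hX] bs unfolding basic_iff by blast
      have "(\<Sum>J\<in>Js. pcompose (u J) (monom 1 n) * pcompose (hX J) (monom 1 n)) = 1"
        using arg_cong[OF u, of "\<lambda>p. pcompose p (monom 1 n)"] by (simp add: pcompose_sum pcompose_mult pcompose_1)
      moreover have "d dvd (\<Sum>J\<in>Js. pcompose (u J) (monom 1 n) * pcompose (hX J) (monom 1 n))"
        using dJ by (intro dvd_sum) simp
      ultimately show "is_unit d" by simp
    qed
  qed
qed

end




theorem theorem4p1:
  fixes n :: nat and g :: "nat \<Rightarrow> 'a::{field,finite} poly"
  assumes "n \<ge> 2" and "n dvd card (UNIV :: 'a set) - 1"
    and "g \<in> skp n"
    and "delay_free n g" and "semi_reduced n g"
  shows "(direct_summand_Fz n (left_ideal_gen n g) \<longleftrightarrow> direct_summand_ring n (left_ideal_gen n g))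
       \<and> (direct_summand_ring n (left_ideal_gen n g) \<longleftrightarrow> M_basic n (xi n g))"
proof -
  have n0: "n > 0" using assms(1) by simp
  interpret sk n g by unfold_locales (use n0 assms(3) in auto)
  have I: "left_ideal_gen n g = range (lcomb n q)" by (rule left_ideal_gen_eq[OF n0])
  have ind: indep by (rule indep_semi[OF assms(5)])
  have A: "direct_summand_Fz n (left_ideal_gen n g) \<longleftrightarrow> RI"
    unfolding I using Fz_RI[OF ind] RI_ring ring_imp_Fz[OF n0] by blast
  have B: "direct_summand_ring n (left_ideal_gen n g) \<longleftrightarrow> RI"
    unfolding I using Fz_RI[OF ind] RI_ring ring_imp_Fz[OF n0] by blast
  have C: "M_basic n (xi n g) \<longleftrightarrow> basic Xs"
    unfolding M_basic_def nonzero_rows_X using in_M_X delay_free_mat_X[OF assms(4)] by blast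
  show ?thesis using A B C RI_iff_CQ CQ_iff_basic[OF assms(4)] by blast
qed


end
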